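(* Let $1\le h,t\le n$, $\mathbf j=(j_k)\in\mathbb N^n_\vartriangle$ and $A=(a_{i,j})\in\Theta^\pm_\vartriangle(n)$. The following hold in $\mathcal S_\vartriangle(n,r)_{\mathbb Q}$ for every $r\ge0$: (1) $0[\mathbf e_t,r]\,A[\mathbf j,r]=A[\mathbf j+\mathbf e_t,r]+\big(\sum_{s\in\mathbb Z}a_{t,s}\big)A[\mathbf j,r]$; (2) for $\varepsilon\in\{1,-1\}$, $$E^\vartriangle_{h,h+\varepsilon}[\mathbf 0,r]\,A[\mathbf j,r]=\sum_{i\ne h,h+\varepsilon;\ a_{h+\varepsilon,i}\ge1}(a_{h,i}+1)(A+E^\vartriangle_{h,i}-E^\vartriangle_{h+\varepsilon,i})[\mathbf j,r]+\sum_{0\le i\le j_h}(-1)^i\binom{j_h}{i}(A-E^\vartriangle_{h+\varepsilon,h})[\mathbf j+(1-i)\mathbf e_h,r]+(a_{h,h+\varepsilon}+1)\sum_{0\le i\le j_{h+\varepsilon}}\binom{j_{h+\varepsilon}}{i}(A+E^\vartriangle_{h,h+\varepsilon})[\mathbf j-i\mathbf e_{h+\varepsilon},r];$$ (3) for $m\in\mathbb Z\setminus\{0\}$, $$E^\vartriangle_{h,h+mn}[\mathbf 0,r]\,A[\mathbf j,r]=\sum_{s\notin\{h,h-mn\};\ a_{h,s}\ge1}(a_{h,s+mn}+1)(A+E^\vartriangle_{h,s+mn}-E^\vartriangle_{h,s})[\mathbf j,r]+\sum_{0\le t\le j_h}(a_{h,h+mn}+1)\binom{j_h}{t}(A+E^\vartriangle_{h,h+mn})[\mathbf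 j-t\mathbf e_h,r]+\sum_{0\le t\le j_h}(-1)^t\binom{j_h}{t}(A-E^\vartriangle_{h,h-mn})[\mathbf j+(1-t)\mathbf e_h,r].$$
   Context: Fix $n\ge2$. $I_\vartriangle(n,r)$ is the set of integer sequences $\mathbf i=(i_k)_{k\in\mathbb Z}$ with $i_{k+r}=i_k+n$, identified with $\mathbb Z^r$ via $(i_1,\dots,i_r)$. $\Omega_{\mathbb Q}^{\otimes r}$ is the $\mathbb Q$-space with basis $\omega_{\mathbf i}$ ($\mathbf i\in I_\vartriangle(n,r)$). The affine symmetric group $\mathfrak S_{\vartriangle,r}$ (bijections $w:\mathbb Z\to\mathbb Z$ with $w(k+r)=w(k)+r$) acts on the right by $\omega_{\mathbf i}w=\omega_{\mathbf iw}$, $(\mathbf iw)_k=i_{w(k)}$, and $\mathcal S_\vartriangle(n,r)_{\mathbb Q}=\mathrm{End}_{\mathbb Q\mathfrak S_{\vartriangle,r}}(\Omega_{\mathbb Q}^{\otimes r})$ with composition as product. $\Theta_\vartriangle(n)$ is the set of matrices $A=(a_{k,l})_{k,l\in\mathbb Z}$ over $\mathbb N$ with $a_{k+n,l+n}=a_{k,l}$ and finitely many nonzero entries in each row; $\sigma(A)=\sum_{1\le k\le n,\,l\in\mathbb Z}a_{k,l}$; $\Theta_\vartriangle(n,r)=\{A\in\Theta_\vartriangle(n)\mid\sigma(A)=r\}$; $\Theta^\pm_\vartriangle(n)$ is the set of $A\in\Theta_\vartriangle(n)$ with zero diagonal. For $\mathbf i,\mathbf j\in I_\vartriangle(n,r)$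 let $M(\mathbf i,\mathbf j)=(a_{k,l})$, $a_{k,l}=|\{s\in\mathbb Z\mid i_s=k,\ j_s=l\}|$; for $A\in\Theta_\vartriangle(n,r)$, $[A]_1\in\mathcal S_\vartriangle(n,r)_{\mathbb Q}$ is the map $\omega_{\mathbf j}\mapsto\sum_{\mathbf i:\,M(\mathbf i,\mathbf j)=A}\omega_{\mathbf i}$; these form a basis. $\mathbb N^n_\vartriangle$ is the set of $n$-periodic sequences of nonnegative integers (indices read mod $n$), $\mathbf e_h$ the periodic unit vector, $\Lambda_\vartriangle(n,m)=\{\lambda\in\mathbb N^n_\vartriangle\mid\sum_{i=1}^n\lambda_i=m\}$, $\mathrm{diag}(\lambda)$ the diagonal matrix with entries $\lambda_i$, and $\lambda^{\mathbf j}=\prod_{i=1}^n\lambda_i^{j_i}$ with $0^0=1$. $E^\vartriangle_{i,j}$ is the matrix with $1$ at positions $(i+sn,j+sn)$, $s\in\mathbb Z$, and $0$ elsewhere. For $A\in\Theta^\pm_\vartriangle(n)$, $A[\mathbf j,r]=\sum_{\lambda\in\Lambda_\vartriangle(n,r-\sigma(A))}\lambda^{\mathbf j}[A+\mathrm{diag}(\lambda)]_1$ if $\sigma(A)\le r$ and $0$ otherwise; moreover $A[\mathbf j,r]:=0$ if some off-diagonal entry of $A$ is negative. $0$ denotes the zero matrix. *)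

theory Defs
  imports Complex_Main "HOL-Library.Function_Algebras"
begin

text \<open>Periodic integer matrices (entries indexed by int x int), n-periodic along the diagonal.
  Entries are allowed to be negative so that expressions like A - E can be formed.\<close>
type_synonym smat = "int \<Rightarrow> int \<Rightarrow> int"

text \<open>An element of the algebra S(n,r)_Q, given by its coefficient matrix w.r.t. the basis
  omega_i (i in Z^r, represented as int lists of length r): f i j is the coefficient of
  omega_i in the image of omega_j.\<close>
type_synonym selt = "int list \<Rightarrow> int list \<Rightarrow> rat"

definition periodic_mat :: "nat \<Rightarrow> smat \<Rightarrow> bool" where
  "periodic_mat n A \<longleftrightarrow> (\<forall>k l. A (k + int n) (l + int n) = A k l)"

definition Theta_pm :: "nat \<Rightarrow> smat set" where
  "Theta_pm n = {A. periodic_mat n A \<and> (\<forall>k l. 0 \<le> A k l) \<and> (\<forall>k. finite {l. A k l \<noteq> 0})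
                    \<and> (\<forall>k. A k k = 0)}"

definition NN_tri :: "nat \<Rightarrow> (int \<Rightarrow> int) set" where
  "NN_tri n = {j. (\<forall>k. j (k + int n) = j k) \<and> (\<forall>k. 0 \<le> j k)}"

definition sigma_mat :: "nat \<Rightarrow> smat \<Rightarrow> int" where
  "sigma_mat n A = (\<Sum>k\<in>{1..int n}. \<Sum>l\<in>{l. A k l \<noteq> 0}. A k l)"

definition Lambda_tri :: "nat \<Rightarrow> nat \<Rightarrow> (int \<Rightarrow> nat) set" where
  "Lambda_tri n m = {lam. (\<forall>k. lam (k + int n) = lam k) \<and> (\<Sum>i\<in>{1..int n}. lam i) = m}"

definition diag_tri :: "(int \<Rightarrow> nat) \<Rightarrow> smat" where
  "diag_tri lam = (\<lambda>k l. if k = l then int (lam k) else 0)"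

definition vpow :: "nat \<Rightarrow> (int \<Rightarrow> nat) \<Rightarrow> (int \<Rightarrow> int) \<Rightarrow> rat" where
  "vpow n lam j = (\<Prod>i\<in>{1..int n}. of_nat (lam i) ^ nat (j i))"

definition E_tri :: "nat \<Rightarrow> int \<Rightarrow> int \<Rightarrow> smat" where
  "E_tri n i j = (\<lambda>k l. if \<exists>s::int. k = i + s * int n \<and> l = j + s * int n then 1 else 0)"

definition unitv :: "nat \<Rightarrow> int \<Rightarrow> int \<Rightarrow> int" where
  "unitv n h = (\<lambda>k. if k mod int n = h mod int n then 1 else 0)"

text \<open>M(i,j) for i, j in Z^r (lists of length r), extended to sequences via
  i_{s+mr} = i_s + mn: a_{k,l} = |{s in Z. i_s = k, j_s = l}|.\<close>
definition Mmat :: "nat \<Rightarrow> int list \<Rightarrow> int list \<Rightarrow> int \<Rightarrow> int \<Rightarrow> nat" where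
  "Mmat n i j k l = card {s. s < length i \<and> (\<exists>m::int. i ! s + m * int n = k \<and> j ! s + m * int n = l)}"

text \<open>[B]_1 : omega_j |-> sum of omega_i over i with M(i,j) = B.\<close>
definition basis1 :: "nat \<Rightarrow> nat \<Rightarrow> smat \<Rightarrow> selt" where
  "basis1 n r B = (\<lambda>i j. if length i = r \<and> length j = r \<and> (\<forall>k l. int (Mmat n i j k l) = B k l)
                         then 1 else 0)"

definition sprod :: "nat \<Rightarrow> selt \<Rightarrow> selt \<Rightarrow> selt" where
  "sprod r f g = (\<lambda>i j. \<Sum>k\<in>{k. length k = r \<and> g k j \<noteq> 0}. f i k * g k j)"

definition ssc :: "rat \<Rightarrow> selt \<Rightarrow> selt" where
  "ssc c f = (\<lambda>i j. c * f i j)"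

definition Abr :: "nat \<Rightarrow> nat \<Rightarrow> smat \<Rightarrow> (int \<Rightarrow> int) \<Rightarrow> selt" where
  "Abr n r A j = (if (\<exists>k l. k \<noteq> l \<and> A k l < 0) then 0
     else if sigma_mat n A \<le> int r then
       (\<Sum>lam\<in>Lambda_tri n (nat (int r - sigma_mat n A)).
           ssc (vpow n lam j) (basis1 n r (A + diag_tri lam)))
     else 0)"

end

theory Submission imports Defs "HOL-Library.FuncSet" begin

lemma sum_app: "(sum f A) x = sum (\<lambda>i. f i x) A"
  by (induction A rule: infinite_finite_induct) auto

lemma ssc_app: "ssc c f x y = c * f x y" by (simp add: ssc_def)

lemma Mmat_alt:
  assumes "0 < n"
  shows "Mmat n x y k l = card {s. s < length x \<and> x!s - y!s = k - l \<and> int n dvd (k - x!s)}"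
proof -
  have "(\<exists>m::int. x ! s + m * int n = k \<and> y ! s + m * int n = l) \<longleftrightarrow>
        (x!s - y!s = k - l \<and> int n dvd (k - x!s))" for s
  proof
    assume "\<exists>m::int. x ! s + m * int n = k \<and> y ! s + m * int n = l"
    then obtain m where "x ! s + m * int n = k" "y ! s + m * int n = l" by blast
    then show "x!s - y!s = k - l \<and> int n dvd (k - x!s)" by (auto simp: algebra_simps)
  next
    assume "x!s - y!s = k - l \<and> int n dvd (k - x!s)"
    then obtain c where "x!s - y!s = k - l" "k - x!s = int n * c" by (auto elim!: dvdE)
    then show "\<exists>m::int. x ! s + m * int n = k \<and> y ! s + m * int n = l"
      by (intro exI[of _ c]) (auto simp: algebra_simps)
  qed
  then show ?thesis unfolding Mmat_def by simp
qed

lemma E_alt: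
  "E_tri n h k a b = (if a - b = h - k \<and> int n dvd (a - h) then 1 else 0)"
proof -
  have "(\<exists>s::int. a = h + s * int n \<and> b = k + s * int n) \<longleftrightarrow> (a - b = h - k \<and> int n dvd (a - h))"
  proof
    assume "\<exists>s::int. a = h + s * int n \<and> b = k + s * int n"
    then show "a - b = h - k \<and> int n dvd (a - h)" by auto
  next
    assume "a - b = h - k \<and> int n dvd (a - h)"
    then obtain c where "a - b = h - k" "a - h = int n * c" by (auto elim!: dvdE)
    then show "\<exists>s::int. a = h + s * int n \<and> b = k + s * int n"
      by (intro exI[of _ c]) (auto simp: algebra_simps)
  qed
  then show ?thesis unfolding E_tri_def by simp
qed

lemma periodic_nat:
  assumes "periodic_mat n A" shows "A (k + int m * int n) (l + int m * int n) = A k l"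
proof (induction m)
  case 0 then show ?case by simp
next
  case (Suc m)
  have "A (k + int (Suc m) * int n) (l + int (Suc m) * int n)
      = A ((k + int m * int n) + int n) ((l + int m * int n) + int n)" by (simp add: algebra_simps)
  also have "\<dots> = A (k + int m * int n) (l + int m * int n)"
    using assms unfolding periodic_mat_def by blast
  finally show ?case using Suc by simp
qed

lemma periodic_int:
  assumes "periodic_mat n A" shows "A (k + m * int n) (l + m * int n) = A k l"
proof (cases "0 \<le> m")
  case True
  then obtain q where "m = int q" using nonneg_int_cases by blast
  then show ?thesis using periodic_nat[OF assms] by simp
next
  case False
  define q where "q = nat (-m)"
  then have q: "m = - int q" using False by simp
  have "A k l = A ((k + m * int n) + int q * int n) ((l + m * int n) + int q * int n)"
    using q by simp
  also have "\<dots> = A (k + m * int n) (l + m * int n)" using periodic_nat[OF assms] by blast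
  finally show ?thesis by simp
qed

lemma dvd_shift_n: "int n dvd (a + int n - h) \<longleftrightarrow> int n dvd (a - h)"
proof -
  have e: "a + int n - h = (a - h) + int n" by simp
  show ?thesis by (simp only: e dvd_add_left_iff[OF dvd_refl])
qed

lemma E_periodic: "periodic_mat n (E_tri n h k)"
  unfolding periodic_mat_def E_alt using dvd_shift_n by (auto simp: algebra_simps)

lemma Mmat_nonneg_ind: "0 \<le> int (Mmat n x y a b)" by simp

definition good :: "nat \<Rightarrow> smat \<Rightarrow> bool" where
  "good n B \<longleftrightarrow> periodic_mat n B \<and> (\<forall>k. B k k = 0) \<and> (\<forall>k. finite {l. B k l \<noteq> 0})"

definition indM :: "nat \<Rightarrow> nat \<Rightarrow> smat \<Rightarrow> int list \<Rightarrow> int list \<Rightarrow> bool" where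
  "indM n r B x y \<longleftrightarrow> length x = r \<and> length y = r \<and> (\<forall>a b. a \<noteq> b \<longrightarrow> int (Mmat n x y a b) = B a b)"

definition dpow :: "nat \<Rightarrow> int list \<Rightarrow> int list \<Rightarrow> (int \<Rightarrow> int) \<Rightarrow> rat" where
  "dpow n x y j = (\<Prod>t\<in>{1..int n}. of_nat (Mmat n x y t t) ^ nat (j t))"

definition rowP :: "nat \<Rightarrow> int list \<Rightarrow> int \<Rightarrow> nat set" where
  "rowP n x k = {s. s < length x \<and> int n dvd (k - x!s)}"

lemma Mmat_periodic:
  assumes "0 < n" shows "Mmat n x y (k + int n) (l + int n) = Mmat n x y k l"
  unfolding Mmat_alt[OF assms] using dvd_shift_n[of n k] by (simp add: algebra_simps)

lemma per1_nat:
  assumes "\<And>k. f (k + int n) = f k" shows "f (k + int m * int n) = f k"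
proof (induction m)
  case 0 then show ?case by simp
next
  case (Suc m)
  have "f (k + int (Suc m) * int n) = f ((k + int m * int n) + int n)" by (simp add: algebra_simps)
  also have "\<dots> = f (k + int m * int n)" using assms by blast
  finally show ?case using Suc by simp
qed

lemma per1:
  assumes "\<And>k. f (k + int n) = f k" shows "f (k + c * int n) = f k"
proof (cases "0 \<le> c")
  case True
  then obtain q where "c = int q" using nonneg_int_cases by blast
  then show ?thesis using per1_nat[of f n, OF assms] by simp
next
  case False
  define q where "q = nat (-c)"
  then have q: "c = - int q" using False by simp
  have "f k = f ((k + c * int n) + int q * int n)" using q by simp
  also have "\<dots> = f (k + c * int n)" using per1_nat[of f n, OF assms] by blast
  finally show ?thesis by simp
qed

lemma per1_rep:
  assumes "0 < n" "\<And>k. f (k + int n) = f k" shows "f k = f ((k - 1) mod int n + 1)"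
proof -
  have e: "(k - 1) mod int n + 1 = k + (- ((k - 1) div int n)) * int n"
    using div_mult_mod_eq[of "k - 1" "int n"] by (simp add: algebra_simps)
  have "f ((k - 1) mod int n + 1) = f (k + (- ((k - 1) div int n)) * int n)" by (simp only: e)
  also have "\<dots> = f k" by (rule per1[of f n, OF assms(2)])
  finally show ?thesis by simp
qed

lemma rep_range: "0 < n \<Longrightarrow> 1 \<le> (k - 1) mod int n + 1 \<and> (k - 1) mod int n + 1 \<le> int n"
  by (simp add: pos_mod_bound pos_mod_sign add1_zle_eq)

lemma rep_dvd: "int n dvd ((k - 1) mod int n + 1 - k)"
proof -
  have "(k - 1) mod int n + 1 - k = - (int n * ((k - 1) div int n))"
    using div_mult_mod_eq[of "k - 1" "int n"] by (simp add: algebra_simps)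
  then show ?thesis by simp
qed

lemma dvd_range_eq:
  assumes "1 \<le> a" "a \<le> int n" "1 \<le> b" "b \<le> int n" "int n dvd (a - b)" shows "a = b"
proof (rule ccontr)
  assume "a \<noteq> b"
  then consider "a < b" | "b < a" by linarith
  then show False
  proof cases
    case 1
    have "int n dvd (b - a)" using assms(5) dvd_minus_iff[of "int n" "a - b"] by simp
    then have "int n \<le> b - a" using 1 by (intro zdvd_imp_le) auto
    then show False using assms by linarith
  next
    case 2
    then have "int n \<le> a - b" using assms(5) by (intro zdvd_imp_le) auto
    then show False using assms by linarith
  qed
qed

lemma row_sum:
  assumes "0 < n"
  shows "finite {l. Mmat n x y k l \<noteq> 0} \<and> (\<Sum>l\<in>{l. Mmat n x y k l \<noteq> 0}. Mmat n x y k l) = card (rowP n x k)"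
proof -
  define P where "P = rowP n x k"
  define f where "f s = k - x!s + y!s" for s
  have fin: "finite P" unfolding P_def rowP_def by auto
  have M: "Mmat n x y k l = card {s \<in> P. f s = l}" for l
    unfolding Mmat_alt[OF assms] P_def rowP_def f_def by (rule arg_cong[where f=card]) auto
  have S: "{l. Mmat n x y k l \<noteq> 0} = f ` P"
  proof (intro set_eqI iffI)
    fix l assume "l \<in> {l. Mmat n x y k l \<noteq> 0}"
    then have "card {s \<in> P. f s = l} \<noteq> 0" using M by simp
    then have "{s \<in> P. f s = l} \<noteq> {}" by (intro notI) simp
    then show "l \<in> f ` P" by blast
  next
    fix l assume "l \<in> f ` P"
    then obtain s where "s \<in> P" "f s = l" by blast
    then have "{s \<in> P. f s = l} \<noteq> {}" by blast
    then show "l \<in> {l. Mmat n x y k l \<noteq> 0}" using M fin by simp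
  qed
  have "card P = (\<Sum>s\<in>P. 1::nat)" by simp
  also have "\<dots> = (\<Sum>l\<in>f ` P. \<Sum>s\<in>{s \<in> P. f s = l}. 1::nat)" by (rule sum.image_gen[OF fin])
  also have "\<dots> = (\<Sum>l\<in>f ` P. Mmat n x y k l)" using M by simp
  finally show ?thesis using S fin P_def by simp
qed

lemma row_total:
  assumes "0 < n" shows "(\<Sum>k\<in>{1..int n}. card (rowP n x k)) = length x"
proof -
  have fin: "\<forall>k\<in>{1..int n}. finite (rowP n x k)" unfolding rowP_def by auto
  have disj: "\<forall>i\<in>{1..int n}. \<forall>j\<in>{1..int n}. i \<noteq> j \<longrightarrow> rowP n x i \<inter> rowP n x j = {}"
  proof (intro ballI impI)
    fix i j assume ij: "i \<in> {1..int n}" "j \<in> {1..int n}" "i \<noteq> j"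
    show "rowP n x i \<inter> rowP n x j = {}"
    proof (rule ccontr)
      assume "rowP n x i \<inter> rowP n x j \<noteq> {}"
      then obtain s where "int n dvd (i - x!s)" "int n dvd (j - x!s)" unfolding rowP_def by blast
      then have "int n dvd (i - j)" using dvd_diff by fastforce
      then show False using dvd_range_eq[of i n j] ij by auto
    qed
  qed
  have U: "(\<Union>k\<in>{1..int n}. rowP n x k) = {..<length x}"
  proof (intro set_eqI iffI)
    fix s assume "s \<in> {..<length x}"
    then have "s \<in> rowP n x ((x!s - 1) mod int n + 1)" unfolding rowP_def using rep_dvd by auto
    then show "s \<in> (\<Union>k\<in>{1..int n}. rowP n x k)" using rep_range[OF assms, of "x!s"] by auto
  qed (auto simp: rowP_def)
  have "card (\<Union>k\<in>{1..int n}. rowP n x k) = (\<Sum>k\<in>{1..int n}. card (rowP n x k))"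
    by (rule card_UN_disjoint) (use fin disj in auto)
  then show ?thesis using U by simp
qed

lemma sigma_ind:
  assumes "0 < n" "good n B" "indM n r B x y"
  shows "sigma_mat n B = int r - (\<Sum>t\<in>{1..int n}. int (Mmat n x y t t))"
proof -
  have len: "length x = r" using assms(3) unfolding indM_def by simp
  have row: "(\<Sum>l\<in>{l. B k l \<noteq> 0}. B k l) = int (card (rowP n x k)) - int (Mmat n x y k k)" for k
  proof -
    define S where "S = {l. Mmat n x y k l \<noteq> 0}"
    have fin: "finite S" and rs: "(\<Sum>l\<in>S. Mmat n x y k l) = card (rowP n x k)"
      using row_sum[OF assms(1)] S_def by auto
    have Bk: "B k k = 0" using assms(2) unfolding good_def by simp
    have Bl: "l \<noteq> k \<Longrightarrow> B k l = int (Mmat n x y k l)" for l using assms(3) unfolding indM_def by simp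
    have SE: "{l. B k l \<noteq> 0} = S - {k}"
    proof (intro set_eqI)
      fix l show "l \<in> {l. B k l \<noteq> 0} \<longleftrightarrow> l \<in> S - {k}"
        using Bk Bl[of l] unfolding S_def by (cases "l = k") auto
    qed
    have "(\<Sum>l\<in>{l. B k l \<noteq> 0}. B k l) = (\<Sum>l\<in>S - {k}. int (Mmat n x y k l))"
      unfolding SE by (rule sum.cong) (auto simp: Bl)
    also have "\<dots> = (\<Sum>l\<in>S. int (Mmat n x y k l)) - int (Mmat n x y k k)"
      using fin by (simp add: sum_diff1 S_def)
    also have "(\<Sum>l\<in>S. int (Mmat n x y k l)) = int (card (rowP n x k))"
    proof -
      have "int (\<Sum>l\<in>S. Mmat n x y k l) = int (card (rowP n x k))" using rs by (rule arg_cong)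
      then show ?thesis by simp
    qed
    finally show ?thesis .
  qed
  have "sigma_mat n B = (\<Sum>k\<in>{1..int n}. int (card (rowP n x k)) - int (Mmat n x y k k))"
    unfolding sigma_mat_def using row by simp
  also have "\<dots> = int (\<Sum>k\<in>{1..int n}. card (rowP n x k)) - (\<Sum>t\<in>{1..int n}. int (Mmat n x y t t))"
    by (simp add: sum_subtractf)
  finally show ?thesis using row_total[OF assms(1)] len by simp
qed

lemma Lambda_fin: assumes n: "0 < n" shows "finite (Lambda_tri n m)"
proof -
  define g where "g lam = restrict lam {1..int n}" for lam :: "int \<Rightarrow> nat"
  have inj: "inj_on g (Lambda_tri n m)"
  proof (rule inj_onI)
    fix l1 l2 assume l: "l1 \<in> Lambda_tri n m" "l2 \<in> Lambda_tri n m" "g l1 = g l2"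
    show "l1 = l2"
    proof
      fix k
      have p1: "\<And>k. l1 (k + int n) = l1 k" and p2: "\<And>k. l2 (k + int n) = l2 k"
        using l(1,2) unfolding Lambda_tri_def by auto
      have r: "(k - 1) mod int n + 1 \<in> {1..int n}" using rep_range[OF n] by auto
      have "l1 ((k - 1) mod int n + 1) = l2 ((k - 1) mod int n + 1)"
        using fun_cong[OF l(3)[unfolded g_def], of "(k - 1) mod int n + 1"] r by simp
      moreover have "l1 k = l1 ((k - 1) mod int n + 1)" by (rule per1_rep[of n l1 k, OF n p1])
      moreover have "l2 k = l2 ((k - 1) mod int n + 1)" by (rule per1_rep[of n l2 k, OF n p2])
      ultimately show "l1 k = l2 k" by simp
    qed
  qed
  have "g ` Lambda_tri n m \<subseteq> PiE {1..int n} (\<lambda>_. {0..m})"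
  proof
    fix f assume "f \<in> g ` Lambda_tri n m"
    then obtain lam where lam: "lam \<in> Lambda_tri n m" "f = g lam" by blast
    have "lam i \<le> m" if "i \<in> {1..int n}" for i
    proof -
      have "lam i \<le> (\<Sum>i\<in>{1..int n}. lam i)" by (rule member_le_sum) (use that in auto)
      then show ?thesis using lam(1) unfolding Lambda_tri_def by simp
    qed
    then show "f \<in> PiE {1..int n} (\<lambda>_. {0..m})" using lam(2) unfolding g_def by auto
  qed
  then have "finite (g ` Lambda_tri n m)" by (rule finite_subset) (auto intro: finite_PiE)
  then show ?thesis using finite_imageD inj by blast
qed

lemma Abr_pt:
  assumes n: "0 < n" and g: "good n B"
  shows "Abr n r B j x y = (if indM n r B x y then dpow n x y j else 0)"
proof (cases "\<exists>k l. k \<noteq> l \<and> B k l < 0")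
  case True
  have "\<not> indM n r B x y"
  proof
    assume ind: "indM n r B x y"
    obtain k l where kl: "k \<noteq> l" "B k l < 0" using True by blast
    then have "int (Mmat n x y k l) = B k l" using ind unfolding indM_def by simp
    then show False using kl by simp
  qed
  then show ?thesis using True by (simp add: Abr_def)
next
  case False
  show ?thesis
  proof (cases "indM n r B x y")
    case ind: True
    have sig: "sigma_mat n B = int r - (\<Sum>t\<in>{1..int n}. int (Mmat n x y t t))"
      by (rule sigma_ind[OF n g ind])
    have sle: "sigma_mat n B \<le> int r" using sig by (simp add: sum_nonneg)
    define m where "m = nat (int r - sigma_mat n B)"
    define lam0 where "lam0 = (\<lambda>t. Mmat n x y t t)"
    have "int m = int (\<Sum>t\<in>{1..int n}. lam0 t)"
      using sig sle unfolding m_def lam0_def by (simp add: of_nat_sum)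
    then have m_eq: "m = (\<Sum>t\<in>{1..int n}. lam0 t)" by (simp only: of_nat_eq_iff)
    have lam0_in: "lam0 \<in> Lambda_tri n m"
      unfolding Lambda_tri_def using Mmat_periodic[OF n] m_eq unfolding lam0_def by simp
    have fin: "finite (Lambda_tri n m)" by (rule Lambda_fin[OF n])
    have b0: "basis1 n r (B + diag_tri lam0) x y = 1"
      using ind g unfolding basis1_def indM_def good_def diag_tri_def lam0_def by auto
    have b1: "basis1 n r (B + diag_tri lam) x y = 0" if "lam \<noteq> lam0" for lam
    proof (rule ccontr)
      assume "basis1 n r (B + diag_tri lam) x y \<noteq> 0"
      then have h: "\<forall>k l. int (Mmat n x y k l) = B k l + diag_tri lam k l"
        unfolding basis1_def by (auto split: if_splits)
      have "lam = lam0"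
      proof
        fix k show "lam k = lam0 k" using h[rule_format, of k k] g
          unfolding lam0_def good_def diag_tri_def by simp
      qed
      then show False using that by simp
    qed
    have "Abr n r B j = (\<Sum>lam\<in>Lambda_tri n m. ssc (vpow n lam j) (basis1 n r (B + diag_tri lam)))"
      unfolding m_def by (simp only: Abr_def if_not_P[OF False] if_P[OF sle])
    then have "Abr n r B j x y = (\<Sum>lam\<in>Lambda_tri n m. vpow n lam j * basis1 n r (B + diag_tri lam) x y)"
      by (simp add: sum_app ssc_def)
    also have "\<dots> = vpow n lam0 j * basis1 n r (B + diag_tri lam0) x y
        + (\<Sum>lam\<in>Lambda_tri n m - {lam0}. vpow n lam j * basis1 n r (B + diag_tri lam) x y)"
      by (rule sum.remove[OF fin lam0_in])
    also have "(\<Sum>lam\<in>Lambda_tri n m - {lam0}. vpow n lam j * basis1 n r (B + diag_tri lam) x y) = 0"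
      by (rule sum.neutral) (auto simp: b1)
    also have "vpow n lam0 j = dpow n x y j" unfolding vpow_def dpow_def lam0_def by simp
    finally have "Abr n r B j x y = dpow n x y j * basis1 n r (B + diag_tri lam0) x y"
      by (simp only: add_0_right)
    then show ?thesis by (simp only: b0 mult_1_right if_P[OF ind])
  next
    case nind: False
    have bz: "basis1 n r (B + diag_tri lam) x y = 0" for lam
    proof (rule ccontr)
      assume "basis1 n r (B + diag_tri lam) x y \<noteq> 0"
      then have h: "length x = r" "length y = r" "\<forall>k l. int (Mmat n x y k l) = B k l + diag_tri lam k l"
        unfolding basis1_def by (auto split: if_splits)
      then have "indM n r B x y" unfolding indM_def diag_tri_def by auto
      then show False using nind by simp
    qed
    have "Abr n r B j x y = 0"
    proof (cases "sigma_mat n B \<le> int r")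
      case True
      have "Abr n r B j = (\<Sum>lam\<in>Lambda_tri n (nat (int r - sigma_mat n B)). ssc (vpow n lam j) (basis1 n r (B + diag_tri lam)))"
        by (simp only: Abr_def if_not_P[OF False] if_P[OF True])
      then have "Abr n r B j x y = (\<Sum>lam\<in>Lambda_tri n (nat (int r - sigma_mat n B)). vpow n lam j * basis1 n r (B + diag_tri lam) x y)"
        by (simp add: sum_app ssc_def)
      also have "\<dots> = 0" by (simp add: bz)
      finally show ?thesis .
    next
      case False2: False
      show ?thesis by (simp only: Abr_def if_not_P[OF False] if_not_P[OF False2] zero_fun_def)
    qed
    then show ?thesis using nind by simp
  qed
qed

lemma good_zero: "good n 0" unfolding good_def periodic_mat_def by simp

lemma good_E: assumes "h \<noteq> k" shows "good n (E_tri n h k)"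
proof -
  have "{l. E_tri n h k a l \<noteq> 0} \<subseteq> {a - h + k}" for a unfolding E_alt by auto
  then have "finite {l. E_tri n h k a l \<noteq> 0}" for a using finite_subset by blast
  moreover have "E_tri n h k a a = 0" for a using assms unfolding E_alt by auto
  ultimately show ?thesis using E_periodic unfolding good_def by blast
qed

lemma good_add: assumes "good n A" "good n B" shows "good n (A + B)"
proof -
  have "{l. (A + B) k l \<noteq> 0} \<subseteq> {l. A k l \<noteq> 0} \<union> {l. B k l \<noteq> 0}" for k by auto
  then have "finite {l. (A + B) k l \<noteq> 0}" for k using assms unfolding good_def
    by (meson finite_Un finite_subset)
  then show ?thesis using assms unfolding good_def periodic_mat_def by simp
qed

lemma good_diff: assumes "good n A" "good n B" shows "good n (A - B)"
proof -
  have "{l. (A - B) k l \<noteq> 0} \<subseteq> {l. A k l \<noteq> 0} \<union> {l. B k l \<noteq> 0}" for k by auto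
  then have "finite {l. (A - B) k l \<noteq> 0}" for k using assms unfolding good_def
    by (meson finite_Un finite_subset)
  then show ?thesis using assms unfolding good_def periodic_mat_def by simp
qed

lemma good_Theta: "A \<in> Theta_pm n \<Longrightarrow> good n A"
  unfolding Theta_pm_def good_def by auto

lemma dvd_sw: "int n dvd (h - u) \<Longrightarrow> int n dvd (a - u) \<longleftrightarrow> int n dvd (a - h)"
proof -
  assume d: "int n dvd (h - u)"
  have "a - u = (a - h) + (h - u)" by simp
  then show ?thesis using dvd_add_left_iff[OF d, of "a - h"] by simp
qed

lemma supp_fin:
  assumes n: "0 < n" and g: "good n B"
  shows "finite {z. length z = r \<and> Abr n r B j z y \<noteq> 0}"
proof -
  define D where "D = (\<Union>a\<in>{1..int n}. (\<lambda>b. a - b) ` {b. B a b \<noteq> 0}) \<union> {0}"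
  have finD: "finite D" using g unfolding D_def good_def by auto
  define W where "W = (\<Union>s<length y. (\<lambda>d. y!s + d) ` D)"
  have finW: "finite W" using finD unfolding W_def by auto
  have per: "periodic_mat n B" using g unfolding good_def by simp
  have "{z. length z = r \<and> Abr n r B j z y \<noteq> 0} \<subseteq> {z. set z \<subseteq> W \<and> length z = r}"
  proof
    fix z assume "z \<in> {z. length z = r \<and> Abr n r B j z y \<noteq> 0}"
    then have lz: "length z = r" and nz: "Abr n r B j z y \<noteq> 0" by auto
    then have ind: "indM n r B z y" using Abr_pt[OF n g] by (auto split: if_splits)
    then have ly: "length y = r" unfolding indM_def by simp
    have "set z \<subseteq> W"
    proof
      fix c assume "c \<in> set z"
      then obtain s where s: "s < length z" "c = z!s" by (auto simp: in_set_conv_nth)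
      have "z!s - y!s \<in> D"
      proof (cases "z!s = y!s")
        case True then show ?thesis unfolding D_def by simp
      next
        case False
        have mem: "s \<in> {s'. s' < length z \<and> z!s' - y!s' = z!s - y!s \<and> int n dvd (z!s - z!s')}"
          using s by simp
        have fin: "finite {s'. s' < length z \<and> z!s' - y!s' = z!s - y!s \<and> int n dvd (z!s - z!s')}"
          by (rule finite_subset[of _ "{..<length z}"]) auto
        have "Mmat n z y (z!s) (y!s) \<noteq> 0" unfolding Mmat_alt[OF n]
          using mem fin by (auto simp: card_eq_0_iff)
        moreover have "int (Mmat n z y (z!s) (y!s)) = B (z!s) (y!s)" using ind False unfolding indM_def by simp
        ultimately have Bnz: "B (z!s) (y!s) \<noteq> 0" by simp
        define a where "a = (z!s - 1) mod int n + 1"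
        define c0 where "c0 = (z!s - 1) div int n"
        have za: "z!s = a + c0 * int n" unfolding a_def c0_def
          using div_mult_mod_eq[of "z!s - 1" "int n"] by (simp add: algebra_simps)
        define b where "b = y!s - c0 * int n"
        have "B a b = B (a + c0 * int n) (b + c0 * int n)" using periodic_int[OF per] by simp
        also have "\<dots> = B (z!s) (y!s)" using za b_def by simp
        finally have "B a b \<noteq> 0" using Bnz by simp
        moreover have "a \<in> {1..int n}" using rep_range[OF n] a_def by simp
        moreover have "z!s - y!s = a - b" using za b_def by simp
        ultimately show ?thesis unfolding D_def by blast
      qed
      moreover have "s < length y" using s lz ly by simp
      ultimately show "c \<in> W" unfolding W_def using s
        by (auto intro!: bexI[of _ s] image_eqI[of _ _ "z!s - y!s"])
    qed
    then show "z \<in> {z. set z \<subseteq> W \<and> length z = r}" using lz by simp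
  qed
  then show ?thesis using finite_lists_length_eq[OF finW, of r] finite_subset by blast
qed

lemma Esupp:
  assumes n: "0 < n" and hk: "h \<noteq> k" and len: "length x = r"
  shows "{z. indM n r (E_tri n h k) x z} = (\<lambda>s. x[s := x!s + (k - h)]) ` rowP n x h"
proof (intro set_eqI iffI)
  fix z assume "z \<in> (\<lambda>s. x[s := x!s + (k - h)]) ` rowP n x h"
  then obtain s0 where s0: "s0 < length x" "int n dvd (h - x!s0)" and z: "z = x[s0 := x!s0 + (k - h)]"
    unfolding rowP_def by blast
  have A: "x!s - z!s = 0" if "s \<noteq> s0" for s unfolding z using that by simp
  have B: "x!s0 - z!s0 = h - k" unfolding z using s0 by simp
  have "int (Mmat n x z a b) = E_tri n h k a b" if ab: "a \<noteq> b" for a b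
  proof -
    have "{s. s < length x \<and> x!s - z!s = a - b \<and> int n dvd (a - x!s)}
        = {s. s = s0 \<and> a - b = h - k \<and> int n dvd (a - h)}"
    proof (rule Collect_cong)
      fix s
      show "(s < length x \<and> x!s - z!s = a - b \<and> int n dvd (a - x!s)) \<longleftrightarrow>
          (s = s0 \<and> a - b = h - k \<and> int n dvd (a - h))"
      proof (cases "s = s0")
        case True
        then show ?thesis using B s0(1) dvd_sw[OF s0(2), of a] by auto
      next
        case False
        then show ?thesis using A[OF False] ab by auto
      qed
    qed
    moreover have "card {s. s = s0 \<and> a - b = h - k \<and> int n dvd (a - h)}
        = (if a - b = h - k \<and> int n dvd (a - h) then 1 else 0)" by simp
    ultimately show ?thesis unfolding Mmat_alt[OF n] E_alt by simp
  qed
  then show "z \<in> {z. indM n r (E_tri n h k) x z}" unfolding indM_def using len z by simp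
next
  fix z assume "z \<in> {z. indM n r (E_tri n h k) x z}"
  then have ind: "indM n r (E_tri n h k) x z" by simp
  then have lz: "length z = r" unfolding indM_def by simp
  define T where "T = {s. s < r \<and> x!s \<noteq> z!s}"
  have c1: "x!s - z!s = h - k \<and> int n dvd (h - x!s)" if "s \<in> T" for s
  proof -
    have mem: "s \<in> {s'. s' < length x \<and> x!s' - z!s' = x!s - z!s \<and> int n dvd (x!s - x!s')}"
      using that len unfolding T_def by simp
    have fin: "finite {s'. s' < length x \<and> x!s' - z!s' = x!s - z!s \<and> int n dvd (x!s - x!s')}"
      by (rule finite_subset[of _ "{..<length x}"]) auto
    have "Mmat n x z (x!s) (z!s) \<noteq> 0" unfolding Mmat_alt[OF n]
      using mem fin by (auto simp: card_eq_0_iff)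
    moreover have "int (Mmat n x z (x!s) (z!s)) = E_tri n h k (x!s) (z!s)"
      using ind that unfolding indM_def T_def by simp
    ultimately have "E_tri n h k (x!s) (z!s) \<noteq> 0" by simp
    then have "x!s - z!s = h - k \<and> int n dvd (x!s - h)" unfolding E_alt by (simp split: if_splits)
    then show ?thesis using dvd_minus_iff[of "int n" "x!s - h"] by simp
  qed
  have "int (Mmat n x z h k) = 1" using ind hk unfolding indM_def E_alt by simp
  moreover have "{s. s < length x \<and> x!s - z!s = h - k \<and> int n dvd (h - x!s)} = T"
  proof (intro set_eqI iffI)
    fix s assume "s \<in> {s. s < length x \<and> x!s - z!s = h - k \<and> int n dvd (h - x!s)}"
    then have "s < r" "x!s - z!s = h - k" using len by auto
    then show "s \<in> T" using hk unfolding T_def by auto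
  next
    fix s assume s: "s \<in> T"
    then have "s < length x" using len unfolding T_def by simp
    then show "s \<in> {s. s < length x \<and> x!s - z!s = h - k \<and> int n dvd (h - x!s)}" using c1[OF s] by simp
  qed
  ultimately have "card T = 1" unfolding Mmat_alt[OF n] by simp
  then obtain s0 where T: "T = {s0}" by (rule card_1_singletonE)
  then have s0T: "s0 \<in> T" by simp
  then have s0: "s0 < r" "int n dvd (h - x!s0)" "x!s0 - z!s0 = h - k" using c1[OF s0T] unfolding T_def by auto
  have "z = x[s0 := x!s0 + (k - h)]"
  proof (rule nth_equalityI)
    show "length z = length (x[s0 := x!s0 + (k - h)])" using lz len by simp
    fix s assume s: "s < length z"
    show "z!s = x[s0 := x!s0 + (k - h)] ! s"
    proof (cases "s = s0")
      case True
      then show ?thesis using s0 len by simp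
    next
      case False
      then have "s \<notin> T" using T by simp
      then have "x!s = z!s" using s lz unfolding T_def by simp
      then show ?thesis using False by simp
    qed
  qed
  then show "z \<in> (\<lambda>s. x[s := x!s + (k - h)]) ` rowP n x h"
    using s0 len unfolding rowP_def by auto
qed

lemma card_remove_int:
  assumes fin: "finite P" shows "int (card P) = int (card (P - {s})) + (if s \<in> P then 1 else 0)"
proof (cases "s \<in> P")
  case True
  have "card P = Suc (card (P - {s}))" by (rule card.remove[OF fin True])
  then show ?thesis using True by simp
next
  case False
  then have "P - {s} = P" by simp
  then show ?thesis using False by simp
qed

lemma M_mod:
  assumes n: "0 < n" and s0: "s0 < length x" "int n dvd (h - x!s0)"
  shows "int (Mmat n (x[s0 := x!s0 + (k - h)]) y a b)
       = int (Mmat n x y a b) - E_tri n h (y!s0 - x!s0 + h) a b + E_tri n k (y!s0 - x!s0 + h) a b"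
proof -
  define z where "z = x[s0 := x!s0 + (k - h)]"
  define Px where "Px = {s. s < length x \<and> x!s - y!s = a - b \<and> int n dvd (a - x!s)}"
  define Pz where "Pz = {s. s < length x \<and> z!s - y!s = a - b \<and> int n dvd (a - z!s)}"
  have eq: "Pz - {s0} = Px - {s0}"
  proof (intro set_eqI)
    fix s show "s \<in> Pz - {s0} \<longleftrightarrow> s \<in> Px - {s0}"
    proof (cases "s = s0")
      case True then show ?thesis by simp
    next
      case False
      then have "z!s = x!s" unfolding z_def by simp
      then show ?thesis unfolding Pz_def Px_def using False by simp
    qed
  qed
  have fx: "finite Px" and fz: "finite Pz" unfolding Px_def Pz_def by auto
  have zs0: "z!s0 = x!s0 + (k - h)" unfolding z_def using s0 by simp
  have "s0 \<in> Px \<longleftrightarrow> (a - b = h - (y!s0 - x!s0 + h) \<and> int n dvd (a - h))"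
  proof -
    have i1: "(x!s0 - y!s0 = a - b) \<longleftrightarrow> (a - b = h - (y!s0 - x!s0 + h))" by arith
    show ?thesis unfolding Px_def using s0(1) i1 dvd_sw[OF s0(2), of a] by simp
  qed
  then have ex: "(if s0 \<in> Px then 1 else 0) = E_tri n h (y!s0 - x!s0 + h) a b"
    unfolding E_alt by simp
  have d2: "int n dvd (a - (x!s0 + (k - h))) \<longleftrightarrow> int n dvd (a - k)"
  proof -
    have e: "a - (x!s0 + (k - h)) = (a - k) + (h - x!s0)" by simp
    show ?thesis unfolding e by (rule dvd_add_left_iff[OF s0(2)])
  qed
  have "s0 \<in> Pz \<longleftrightarrow> (a - b = k - (y!s0 - x!s0 + h) \<and> int n dvd (a - k))"
  proof -
    have i1: "(x!s0 + (k - h) - y!s0 = a - b) \<longleftrightarrow> (a - b = k - (y!s0 - x!s0 + h))" by arith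
    show ?thesis unfolding Pz_def using s0(1) i1 d2 zs0 by simp
  qed
  then have ez: "(if s0 \<in> Pz then 1 else 0) = E_tri n k (y!s0 - x!s0 + h) a b"
    unfolding E_alt by simp
  have "int (Mmat n z y a b) = int (card Pz)"
    unfolding Mmat_alt[OF n] Pz_def z_def by simp
  also have "\<dots> = int (card (Px - {s0})) + (if s0 \<in> Pz then 1 else 0)"
    using card_remove_int[OF fz, of s0] eq by simp
  also have "int (card (Px - {s0})) = int (card Px) - (if s0 \<in> Px then 1 else 0)"
    using card_remove_int[OF fx, of s0] by simp
  also have "int (card Px) = int (Mmat n x y a b)" unfolding Mmat_alt[OF n] Px_def by simp
  finally show ?thesis using ex ez z_def by simp
qed

lemma row_img:
  assumes n: "0 < n"
  shows "{l. Mmat n x y k l \<noteq> 0} = (\<lambda>s. y!s - x!s + k) ` rowP n x k"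
    and "\<And>l. card {s \<in> rowP n x k. y!s - x!s + k = l} = Mmat n x y k l"
proof -
  define P where "P = rowP n x k"
  define f where "f s = y!s - x!s + k" for s
  have fin: "finite P" unfolding P_def rowP_def by auto
  have M: "Mmat n x y k l = card {s \<in> P. f s = l}" for l
    unfolding Mmat_alt[OF assms] P_def rowP_def f_def by (rule arg_cong[where f=card]) auto
  show "card {s \<in> rowP n x k. y!s - x!s + k = l} = Mmat n x y k l" for l
    using M unfolding P_def f_def by simp
  show "{l. Mmat n x y k l \<noteq> 0} = (\<lambda>s. y!s - x!s + k) ` rowP n x k"
  proof (intro set_eqI iffI)
    fix l assume "l \<in> {l. Mmat n x y k l \<noteq> 0}"
    then have "card {s \<in> P. f s = l} \<noteq> 0" using M by simp
    then have "{s \<in> P. f s = l} \<noteq> {}" by (intro notI) simp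
    then show "l \<in> (\<lambda>s. y!s - x!s + k) ` rowP n x k" unfolding P_def f_def by blast
  next
    fix l assume "l \<in> (\<lambda>s. y!s - x!s + k) ` rowP n x k"
    then obtain s where "s \<in> P" "f s = l" unfolding P_def f_def by blast
    then have "{s \<in> P. f s = l} \<noteq> {}" by blast
    then show "l \<in> {l. Mmat n x y k l \<noteq> 0}" using M fin by simp
  qed
qed

definition Phi :: "nat \<Rightarrow> int list \<Rightarrow> int list \<Rightarrow> smat \<Rightarrow> int \<Rightarrow> int \<Rightarrow> (int \<Rightarrow> int) \<Rightarrow> int \<Rightarrow> rat" where
  "Phi n x y A h k j l = (if \<forall>a b. a \<noteq> b \<longrightarrow> int (Mmat n x y a b) - E_tri n h l a b + E_tri n k l a b = A a b
     then (\<Prod>t\<in>{1..int n}. of_int (int (Mmat n x y t t) - E_tri n h l t t + E_tri n k l t t) ^ nat (j t))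
     else 0)"

lemma dpow0: "dpow n x y (\<lambda>_. 0) = 1" unfolding dpow_def by simp

lemma LHS_pt:
  assumes n: "0 < n" and hk: "h \<noteq> k" and gA: "good n A" and len: "length x = r" "length y = r"
  shows "sprod r (Abr n r (E_tri n h k) 0) (Abr n r A j) x y
       = (\<Sum>l\<in>{l. Mmat n x y h l \<noteq> 0}. of_nat (Mmat n x y h l) * Phi n x y A h k j l)"
proof -
  define Z where "Z = {z. length z = r \<and> Abr n r A j z y \<noteq> 0}"
  have finZ: "finite Z" unfolding Z_def by (rule supp_fin[OF n gA])
  define zf where "zf s = x[s := x!s + (k - h)]" for s
  define I where "I = zf ` rowP n x h"
  have finI: "finite I" unfolding I_def rowP_def by auto
  have Ieq: "{z. indM n r (E_tri n h k) x z} = I" unfolding I_def zf_def by (rule Esupp[OF n hk len(1)])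
  have F: "Abr n r (E_tri n h k) 0 x z = (if z \<in> I then 1 else 0)" for z
    using Abr_pt[OF n good_E[OF hk], of r "0" x z] Ieq dpow0 by (auto simp: zero_fun_def)
  have lenI: "z \<in> I \<Longrightarrow> length z = r" for z using Ieq unfolding indM_def by auto
  have "sprod r (Abr n r (E_tri n h k) 0) (Abr n r A j) x y
      = (\<Sum>z\<in>Z. Abr n r (E_tri n h k) 0 x z * Abr n r A j z y)"
    unfolding sprod_def Z_def by simp
  also have "\<dots> = (\<Sum>z\<in>Z \<union> I. Abr n r (E_tri n h k) 0 x z * Abr n r A j z y)"
    by (rule sum.mono_neutral_left) (use finZ finI lenI in \<open>auto simp: Z_def\<close>)
  also have "\<dots> = (\<Sum>z\<in>I. Abr n r (E_tri n h k) 0 x z * Abr n r A j z y)"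
    by (rule sum.mono_neutral_right) (use finZ finI F in auto)
  also have "\<dots> = (\<Sum>z\<in>I. Abr n r A j z y)" using F by simp
  also have "\<dots> = (\<Sum>s\<in>rowP n x h. Abr n r A j (zf s) y)"
    unfolding I_def
  proof (rule sum.reindex[unfolded comp_def])
    show "inj_on zf (rowP n x h)"
    proof (rule inj_onI)
      fix s1 s2 assume s: "s1 \<in> rowP n x h" "s2 \<in> rowP n x h" "zf s1 = zf s2"
      show "s1 = s2"
      proof (rule ccontr)
        assume ne: "s1 \<noteq> s2"
        have "zf s1 ! s1 = x!s1 + (k - h)" using s(1) unfolding zf_def rowP_def by simp
        moreover have "zf s2 ! s1 = x!s1" using s(1) ne unfolding zf_def rowP_def by simp
        ultimately show False using s(3) hk by simp
      qed
    qed
  qed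
  also have "\<dots> = (\<Sum>s\<in>rowP n x h. Phi n x y A h k j (y!s - x!s + h))"
  proof (rule sum.cong[OF refl])
    fix s assume s: "s \<in> rowP n x h"
    then have s0: "s < length x" "int n dvd (h - x!s)" unfolding rowP_def by auto
    have MM: "int (Mmat n (zf s) y a b) = int (Mmat n x y a b) - E_tri n h (y!s - x!s + h) a b
        + E_tri n k (y!s - x!s + h) a b" for a b
      unfolding zf_def by (rule M_mod[OF n s0])
    have lz: "length (zf s) = r" using len unfolding zf_def by simp
    have i1: "indM n r A (zf s) y \<longleftrightarrow> (\<forall>a b. a \<noteq> b \<longrightarrow> int (Mmat n x y a b) - E_tri n h (y!s - x!s + h) a b
        + E_tri n k (y!s - x!s + h) a b = A a b)"
      unfolding indM_def using lz len MM by simp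
    moreover have d1: "dpow n (zf s) y j = (\<Prod>t\<in>{1..int n}. of_int (int (Mmat n x y t t)
        - E_tri n h (y!s - x!s + h) t t + E_tri n k (y!s - x!s + h) t t) ^ nat (j t))"
      unfolding dpow_def
    proof (rule prod.cong[OF refl])
      fix t
      have "(of_nat (Mmat n (zf s) y t t) :: rat) = of_int (int (Mmat n (zf s) y t t))" by simp
      also have "\<dots> = of_int (int (Mmat n x y t t)
        - E_tri n h (y!s - x!s + h) t t + E_tri n k (y!s - x!s + h) t t)" by (simp only: MM)
      finally have e: "(of_nat (Mmat n (zf s) y t t) :: rat) = of_int (int (Mmat n x y t t)
        - E_tri n h (y!s - x!s + h) t t + E_tri n k (y!s - x!s + h) t t)" .
      show "(of_nat (Mmat n (zf s) y t t) :: rat) ^ nat (j t) = of_int (int (Mmat n x y t t)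
        - E_tri n h (y!s - x!s + h) t t + E_tri n k (y!s - x!s + h) t t) ^ nat (j t)"
        by (simp only: e)
    qed
    show "Abr n r A j (zf s) y = Phi n x y A h k j (y!s - x!s + h)"
      unfolding Phi_def Abr_pt[OF n gA] i1 d1 by (rule refl)
  qed
  also have "\<dots> = (\<Sum>l\<in>(\<lambda>s. y!s - x!s + h) ` rowP n x h.
       \<Sum>s\<in>{s \<in> rowP n x h. y!s - x!s + h = l}. Phi n x y A h k j (y!s - x!s + h))"
    by (rule sum.image_gen) (auto simp: rowP_def)
  also have "\<dots> = (\<Sum>l\<in>(\<lambda>s. y!s - x!s + h) ` rowP n x h. of_nat (Mmat n x y h l) * Phi n x y A h k j l)"
  proof (rule sum.cong[OF refl])
    fix l
    have "(\<Sum>s\<in>{s \<in> rowP n x h. y!s - x!s + h = l}. Phi n x y A h k j (y!s - x!s + h))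
        = (\<Sum>s\<in>{s \<in> rowP n x h. y!s - x!s + h = l}. Phi n x y A h k j l)" by (rule sum.cong) auto
    also have "\<dots> = of_nat (card {s \<in> rowP n x h. y!s - x!s + h = l}) * Phi n x y A h k j l" by simp
    finally show "(\<Sum>s\<in>{s \<in> rowP n x h. y!s - x!s + h = l}. Phi n x y A h k j (y!s - x!s + h))
        = of_nat (Mmat n x y h l) * Phi n x y A h k j l" using row_img(2)[OF n] by simp
  qed
  finally show ?thesis using row_img(1)[OF n] by simp
qed

lemma rep_id: "1 \<le> h \<Longrightarrow> h \<le> int n \<Longrightarrow> (h - 1) mod int n + 1 = h"
  by (simp add: mod_pos_pos_trivial)

lemma rep_char:
  assumes n: "0 < n" and t: "t \<in> {1..int n}"
  shows "int n dvd (t - k) \<longleftrightarrow> t = (k - 1) mod int n + 1"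
proof -
  define R where "R = (k - 1) mod int n + 1"
  have R1: "1 \<le> R" "R \<le> int n" using rep_range[OF n, of k] unfolding R_def by auto
  have R2: "int n dvd (R - k)" unfolding R_def by (rule rep_dvd)
  have t1: "1 \<le> t" "t \<le> int n" using t by auto
  have "int n dvd (t - k) \<longleftrightarrow> t = R"
  proof
    assume d1: "int n dvd (t - k)"
    have e: "t - R = (t - k) - (R - k)" by simp
    have "int n dvd (t - R)" unfolding e by (rule dvd_diff[OF d1 R2])
    then show "t = R" by (rule dvd_range_eq[OF t1 R1])
  next
    assume "t = R" then show "int n dvd (t - k)" using R2 by simp
  qed
  then show ?thesis using R_def by simp
qed

lemma unitv_rep:
  assumes n: "0 < n" and t: "t \<in> {1..int n}"
  shows "unitv n k t = (if t = (k - 1) mod int n + 1 then 1 else 0)"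
  unfolding unitv_def mod_eq_dvd_iff rep_char[OF n t] by (rule refl)

lemma E_diag:
  assumes n: "0 < n" and t: "t \<in> {1..int n}"
  shows "E_tri n p q t t = (if p = q \<and> t = (p - 1) mod int n + 1 then 1 else 0)"
proof -
  have "(t - t = p - q) = (p = q)" by auto
  then show ?thesis unfolding E_alt rep_char[OF n t] by simp
qed

lemma E_off: "a \<noteq> b \<Longrightarrow> E_tri n p p a b = 0" unfolding E_alt by simp

lemma prod_delta:
  assumes "finite S" "t0 \<in> S"
  shows "(\<Prod>t\<in>S. (if t = t0 then u else v t)) = u * (\<Prod>t\<in>S - {t0}. v t)"
proof -
  have "(\<Prod>t\<in>S. (if t = t0 then u else v t)) = (if t0 = t0 then u else v t0) * (\<Prod>t\<in>S - {t0}. (if t = t0 then u else v t))"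
    by (rule prod.remove[OF assms])
  also have "(\<Prod>t\<in>S - {t0}. (if t = t0 then u else v t)) = (\<Prod>t\<in>S - {t0}. v t)" by (rule prod.cong) auto
  finally show ?thesis by simp
qed

lemma dpow_unit:
  assumes n: "0 < n"
  shows "dpow n x y (j + (\<lambda>q. c * unitv n k q)) =
     of_nat (Mmat n x y ((k - 1) mod int n + 1) ((k - 1) mod int n + 1)) ^ nat (j ((k - 1) mod int n + 1) + c)
     * (\<Prod>t\<in>{1..int n} - {(k - 1) mod int n + 1}. of_nat (Mmat n x y t t) ^ nat (j t))"
proof -
  define tk where "tk = (k - 1) mod int n + 1"
  have tk: "tk \<in> {1..int n}" using rep_range[OF n] tk_def by simp
  have "dpow n x y (j + (\<lambda>q. c * unitv n k q)) = (\<Prod>t\<in>{1..int n}. (if t = tk then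
      of_nat (Mmat n x y tk tk) ^ nat (j tk + c) else of_nat (Mmat n x y t t) ^ nat (j t)))"
    unfolding dpow_def
  proof (rule prod.cong[OF refl])
    fix t assume t: "t \<in> {1..int n}"
    have u: "unitv n k t = (if t = tk then 1 else 0)" using unitv_rep[OF n t] tk_def by simp
    show "of_nat (Mmat n x y t t) ^ nat ((j + (\<lambda>q. c * unitv n k q)) t) = (if t = tk then
      of_nat (Mmat n x y tk tk) ^ nat (j tk + c) else of_nat (Mmat n x y t t) ^ nat (j t))"
    proof (cases "t = tk")
      case True
      have u1: "unitv n k tk = 1" using unitv_rep[OF n tk] tk_def by simp
      then show ?thesis using True by simp
    next
      case False
      then show ?thesis using u by simp
    qed
  qed
  also have "\<dots> = of_nat (Mmat n x y tk tk) ^ nat (j tk + c) * (\<Prod>t\<in>{1..int n} - {tk}. of_nat (Mmat n x y t t) ^ nat (j t))"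
    by (rule prod_delta[OF _ tk]) simp
  finally show ?thesis unfolding tk_def .
qed

lemma binom1: "(\<Sum>i\<in>{0..J}. (-1) ^ i * of_nat (J choose i) * (d::rat) ^ (J + 1 - i)) = d * (d - 1) ^ J"
proof -
  have "(d - 1) ^ J = (-1 + d) ^ J" by simp
  also have "\<dots> = (\<Sum>i\<le>J. of_nat (J choose i) * (-1) ^ i * d ^ (J - i))" by (rule binomial_ring)
  finally have b: "(d - 1) ^ J = (\<Sum>i\<le>J. of_nat (J choose i) * (-1) ^ i * d ^ (J - i))" .
  have "d * (d - 1) ^ J = d * (\<Sum>i\<le>J. of_nat (J choose i) * (-1) ^ i * d ^ (J - i))" by (simp only: b)
  also have "\<dots> = (\<Sum>i\<le>J. d * (of_nat (J choose i) * (-1) ^ i * d ^ (J - i)))" by (rule sum_distrib_left)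
  also have "\<dots> = (\<Sum>i\<in>{0..J}. (-1) ^ i * of_nat (J choose i) * d ^ (J + 1 - i))"
    unfolding atLeast0AtMost
  proof (rule sum.cong[OF refl])
    fix i assume "i \<in> {..J}"
    then have "J + 1 - i = Suc (J - i)" by auto
    then show "d * (of_nat (J choose i) * (-1) ^ i * d ^ (J - i)) = (-1) ^ i * of_nat (J choose i) * d ^ (J + 1 - i)"
      by (simp only: power_Suc mult_ac)
  qed
  finally show ?thesis by (rule sym)
qed

lemma binom2: "(\<Sum>i\<in>{0..J}. of_nat (J choose i) * (d::rat) ^ (J - i)) = (d + 1) ^ J"
proof -
  have "(d + 1) ^ J = (1 + d) ^ J" by (simp add: add.commute)
  also have "\<dots> = (\<Sum>i\<le>J. of_nat (J choose i) * 1 ^ i * d ^ (J - i))" by (rule binomial_ring)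
  also have "\<dots> = (\<Sum>i\<in>{0..J}. of_nat (J choose i) * d ^ (J - i))" unfolding atLeast0AtMost by simp
  finally show ?thesis by (rule sym)
qed

lemma iff_lin: "((u::int) - e1 + e2 = a) = (u = a + e1 - e2)" "((u::int) - e1 + e2 = a) = (u = a - e2 + e1)"
  by arith+

lemmas iff_lin1 = iff_lin(1)

lemma main_pt:
  assumes n: "0 < n" and h: "1 \<le> h" "h \<le> int n" and hk: "h \<noteq> k" and gA: "good n A"
    and nn: "\<forall>a b. 0 \<le> A a b" and j: "j \<in> NN_tri n" and len: "length x = r" "length y = r"
  shows "(\<Sum>l\<in>{l. Mmat n x y h l \<noteq> 0}. of_nat (Mmat n x y h l) * Phi n x y A h k j l) =
    (\<Sum>i\<in>{i. i \<noteq> h \<and> i \<noteq> k \<and> 1 \<le> A k i}. of_int (A h i + 1) *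
        (if indM n r (A + E_tri n h i - E_tri n k i) x y then dpow n x y j else 0))
  + (\<Sum>i\<in>{0..nat (j h)}. ((-1) ^ i * of_nat (nat (j h) choose i)) *
        (if indM n r (A - E_tri n k h) x y then dpow n x y (j + (\<lambda>q. (1 - int i) * unitv n h q)) else 0))
  + of_int (A h k + 1) * (\<Sum>i\<in>{0..nat (j k)}. of_nat (nat (j k) choose i) *
        (if indM n r (A + E_tri n h k) x y then dpow n x y (j - (\<lambda>q. int i * unitv n k q)) else 0))"
proof -
  define f where "f l = of_nat (Mmat n x y h l) * Phi n x y A h k j l" for l
  define L where "L = {l. Mmat n x y h l \<noteq> 0}"
  define I1 where "I1 = {i. i \<noteq> h \<and> i \<noteq> k \<and> 1 \<le> A k i}"
  define V where "V = (L \<union> I1) - {h, k}"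
  define R1 where "R1 = (\<Sum>i\<in>I1. of_int (A h i + 1) *
        (if indM n r (A + E_tri n h i - E_tri n k i) x y then dpow n x y j else (0::rat)))"
  define R2 where "R2 = (\<Sum>i\<in>{0..nat (j h)}. ((-1) ^ i * of_nat (nat (j h) choose i)) *
        (if indM n r (A - E_tri n k h) x y then dpow n x y (j + (\<lambda>q. (1 - int i) * unitv n h q)) else (0::rat)))"
  define R3 where "R3 = of_int (A h k + 1) * (\<Sum>i\<in>{0..nat (j k)}. of_nat (nat (j k) choose i) *
        (if indM n r (A + E_tri n h k) x y then dpow n x y (j - (\<lambda>q. int i * unitv n k q)) else (0::rat)))"
  have finL: "finite L" using row_sum[OF n] unfolding L_def by blast
  have "I1 \<subseteq> {i. A k i \<noteq> 0}" unfolding I1_def by auto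
  then have finI1: "finite I1" using gA unfolding good_def using finite_subset by blast
  have finV: "finite V" using finL finI1 V_def by simp
  have jp: "\<And>q. j (q + int n) = j q" and jnn: "\<And>q. 0 \<le> j q" using j unfolding NN_tri_def by auto
  define tk where "tk = (k - 1) mod int n + 1"
  have tk: "tk \<in> {1..int n}" using rep_range[OF n] tk_def by simp
  have jk: "j k = j tk" unfolding tk_def by (rule per1_rep[of n j k, OF n jp])
  have hrep: "(h - 1) mod int n + 1 = h" using rep_id h by simp
  have hS: "h \<in> {1..int n}" using h by simp
  define P where "P = (\<Prod>t\<in>{1..int n} - {h}. (of_nat (Mmat n x y t t)::rat) ^ nat (j t))"
  define Q where "Q = (\<Prod>t\<in>{1..int n} - {tk}. (of_nat (Mmat n x y t t)::rat) ^ nat (j t))"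

  have s1: "(\<Sum>l\<in>L. f l) = f h + (f k + (\<Sum>l\<in>V. f l))"
  proof -
    have "(\<Sum>l\<in>L. f l) = (\<Sum>l\<in>insert h (insert k V). f l)"
      by (rule sum.mono_neutral_left) (use finV in \<open>auto simp: V_def L_def f_def\<close>)
    also have "\<dots> = f h + (f k + (\<Sum>l\<in>V. f l))" using finV hk by (simp add: V_def)
    finally show ?thesis .
  qed
  have s2: "(\<Sum>l\<in>V. f l) = (\<Sum>l\<in>I1. f l)"
  proof (rule sum.mono_neutral_right[OF finV])
    show "I1 \<subseteq> V" unfolding V_def I1_def by auto
    show "\<forall>l\<in>V - I1. f l = 0"
    proof
      fix l assume l: "l \<in> V - I1"
      then have lh: "l \<noteq> h" "l \<noteq> k" and Akl: "\<not> 1 \<le> A k l" unfolding V_def I1_def by auto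
      have nc: "\<not> (\<forall>a b. a \<noteq> b \<longrightarrow> int (Mmat n x y a b) - E_tri n h l a b + E_tri n k l a b = A a b)"
      proof
        assume c: "\<forall>a b. a \<noteq> b \<longrightarrow> int (Mmat n x y a b) - E_tri n h l a b + E_tri n k l a b = A a b"
        have "int (Mmat n x y k l) - E_tri n h l k l + E_tri n k l k l = A k l" using c lh by auto
        moreover have "E_tri n h l k l = 0" using hk unfolding E_alt by auto
        moreover have "E_tri n k l k l = 1" unfolding E_alt by auto
        ultimately have "int (Mmat n x y k l) + 1 = A k l" by simp
        then show False using Akl by linarith
      qed
      then show "f l = 0" unfolding f_def Phi_def if_not_P[OF nc] by simp
    qed
  qed
  have s3: "(\<Sum>l\<in>I1. f l) = R1"
    unfolding R1_def
  proof (rule sum.cong[OF refl])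
    fix l assume "l \<in> I1"
    then have lh: "l \<noteq> h" "l \<noteq> k" unfolding I1_def by auto
    have eqv: "(\<forall>a b. a \<noteq> b \<longrightarrow> int (Mmat n x y a b) - E_tri n h l a b + E_tri n k l a b = A a b)
        \<longleftrightarrow> indM n r (A + E_tri n h l - E_tri n k l) x y"
      unfolding indM_def using len by (simp add: iff_lin1)
    have pr: "(\<Prod>t\<in>{1..int n}. of_int (int (Mmat n x y t t) - E_tri n h l t t + E_tri n k l t t) ^ nat (j t))
        = dpow n x y j"
      unfolding dpow_def by (rule prod.cong[OF refl]) (use lh in \<open>simp add: E_diag[OF n]\<close>)
    show "f l = of_int (A h l + 1) * (if indM n r (A + E_tri n h l - E_tri n k l) x y then dpow n x y j else 0)"
    proof (cases "indM n r (A + E_tri n h l - E_tri n k l) x y")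
      case True
      then have c: "\<forall>a b. a \<noteq> b \<longrightarrow> int (Mmat n x y a b) - E_tri n h l a b + E_tri n k l a b = A a b"
        using eqv by simp
      have "int (Mmat n x y h l) - E_tri n h l h l + E_tri n k l h l = A h l" using c lh by auto
      moreover have "E_tri n h l h l = 1" unfolding E_alt by simp
      moreover have "E_tri n k l h l = 0" using hk unfolding E_alt by auto
      ultimately have "int (Mmat n x y h l) = A h l + 1" by simp
      then have "(of_nat (Mmat n x y h l)::rat) = of_int (A h l + 1)" by (metis of_int_of_nat_eq)
      then show ?thesis unfolding f_def Phi_def if_P[OF c] if_P[OF True] pr by simp
    next
      case False
      then have nc: "\<not> (\<forall>a b. a \<noteq> b \<longrightarrow> int (Mmat n x y a b) - E_tri n h l a b + E_tri n k l a b = A a b)"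
        using eqv by simp
      show ?thesis unfolding f_def Phi_def if_not_P[OF nc] if_not_P[OF False] by simp
    qed
  qed
  have s4: "f h = R2"
  proof -
    have pw: "(int (Mmat n x y a b) - E_tri n h h a b + E_tri n k h a b = A a b)
        \<longleftrightarrow> (int (Mmat n x y a b) = (A - E_tri n k h) a b)" if "a \<noteq> b" for a b
    proof -
      have "E_tri n h h a b = 0" by (rule E_off[OF that])
      then show ?thesis by simp arith
    qed
    have eqv: "(\<forall>a b. a \<noteq> b \<longrightarrow> int (Mmat n x y a b) - E_tri n h h a b + E_tri n k h a b = A a b)
        \<longleftrightarrow> indM n r (A - E_tri n k h) x y"
      unfolding indM_def using len pw by auto
    show ?thesis
    proof (cases "indM n r (A - E_tri n k h) x y")
      case False
      then have nc: "\<not> (\<forall>a b. a \<noteq> b \<longrightarrow> int (Mmat n x y a b) - E_tri n h h a b + E_tri n k h a b = A a b)"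
        using eqv by simp
      show ?thesis unfolding f_def Phi_def R2_def if_not_P[OF nc] if_not_P[OF False] by simp
    next
      case True
      define d where "d = (of_nat (Mmat n x y h h) :: rat)"
      have "(\<Prod>t\<in>{1..int n}. of_int (int (Mmat n x y t t) - E_tri n h h t t + E_tri n k h t t) ^ nat (j t))
          = (\<Prod>t\<in>{1..int n}. (if t = h then (d - 1) ^ nat (j h) else (of_nat (Mmat n x y t t)::rat) ^ nat (j t)))"
        by (rule prod.cong[OF refl]) (use hk hrep in \<open>auto simp: E_diag[OF n] d_def\<close>)
      also have "\<dots> = (d - 1) ^ nat (j h) * P" unfolding P_def by (rule prod_delta[OF _ hS]) simp
      finally have pe: "(\<Prod>t\<in>{1..int n}. of_int (int (Mmat n x y t t) - E_tri n h h t t + E_tri n k h t t) ^ nat (j t))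
          = (d - 1) ^ nat (j h) * P" .
      have c: "\<forall>a b. a \<noteq> b \<longrightarrow> int (Mmat n x y a b) - E_tri n h h a b + E_tri n k h a b = A a b"
        using eqv True by simp
      have ph: "Phi n x y A h k j h = (d - 1) ^ nat (j h) * P" unfolding Phi_def if_P[OF c] by (rule pe)
      have dp: "dpow n x y (j + (\<lambda>q. (1 - int i) * unitv n h q)) = d ^ (nat (j h) + 1 - i) * P"
        if "i \<in> {0..nat (j h)}" for i
      proof -
        have "nat (j h + (1 - int i)) = nat (j h) + 1 - i" using that jnn[of h] by auto
        then show ?thesis using dpow_unit[OF n, of x y j "1 - int i" h, unfolded hrep, folded P_def d_def] by simp
      qed
      have "R2 = (\<Sum>i\<in>{0..nat (j h)}. ((-1) ^ i * of_nat (nat (j h) choose i)) * (d ^ (nat (j h) + 1 - i) * P))"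
        unfolding R2_def using True dp by (intro sum.cong) auto
      also have "\<dots> = (\<Sum>i\<in>{0..nat (j h)}. (-1) ^ i * of_nat (nat (j h) choose i) * d ^ (nat (j h) + 1 - i)) * P"
        by (simp add: sum_distrib_right mult.assoc)
      also have "\<dots> = d * (d - 1) ^ nat (j h) * P" by (simp only: binom1)
      finally show ?thesis unfolding f_def using ph d_def by simp
    qed
  qed
  have s5: "f k = R3"
  proof -
    have pw: "(int (Mmat n x y a b) - E_tri n h k a b + E_tri n k k a b = A a b)
        \<longleftrightarrow> (int (Mmat n x y a b) = (A + E_tri n h k) a b)" if "a \<noteq> b" for a b
    proof -
      have "E_tri n k k a b = 0" by (rule E_off[OF that])
      then show ?thesis by simp arith
    qed
    have eqv: "(\<forall>a b. a \<noteq> b \<longrightarrow> int (Mmat n x y a b) - E_tri n h k a b + E_tri n k k a b = A a b)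
        \<longleftrightarrow> indM n r (A + E_tri n h k) x y"
      unfolding indM_def using len pw by auto
    show ?thesis
    proof (cases "indM n r (A + E_tri n h k) x y")
      case False
      then have nc: "\<not> (\<forall>a b. a \<noteq> b \<longrightarrow> int (Mmat n x y a b) - E_tri n h k a b + E_tri n k k a b = A a b)"
        using eqv by simp
      show ?thesis unfolding f_def Phi_def R3_def if_not_P[OF nc] if_not_P[OF False] by simp
    next
      case True
      then have c: "\<forall>a b. a \<noteq> b \<longrightarrow> int (Mmat n x y a b) - E_tri n h k a b + E_tri n k k a b = A a b"
        using eqv by simp
      have "int (Mmat n x y h k) - E_tri n h k h k + E_tri n k k h k = A h k" using c hk by auto
      moreover have "E_tri n h k h k = 1" unfolding E_alt by simp
      moreover have "E_tri n k k h k = 0" using hk by (simp add: E_off)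
      ultimately have "int (Mmat n x y h k) = A h k + 1" by simp
      then have Mhk: "(of_nat (Mmat n x y h k)::rat) = of_int (A h k + 1)" by (metis of_int_of_nat_eq)
      define d where "d = (of_nat (Mmat n x y tk tk) :: rat)"
      have "(\<Prod>t\<in>{1..int n}. of_int (int (Mmat n x y t t) - E_tri n h k t t + E_tri n k k t t) ^ nat (j t))
          = (\<Prod>t\<in>{1..int n}. (if t = tk then (d + 1) ^ nat (j k) else (of_nat (Mmat n x y t t)::rat) ^ nat (j t)))"
        by (rule prod.cong[OF refl]) (use hk jk in \<open>auto simp: E_diag[OF n] d_def tk_def\<close>)
      also have "\<dots> = (d + 1) ^ nat (j k) * Q" unfolding Q_def by (rule prod_delta[OF _ tk]) simp
      finally have pe: "(\<Prod>t\<in>{1..int n}. of_int (int (Mmat n x y t t) - E_tri n h k t t + E_tri n k k t t) ^ nat (j t))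
          = (d + 1) ^ nat (j k) * Q" .
      have ph: "Phi n x y A h k j k = (d + 1) ^ nat (j k) * Q" unfolding Phi_def if_P[OF c] by (rule pe)
      have dp: "dpow n x y (j - (\<lambda>q. int i * unitv n k q)) = d ^ (nat (j k) - i) * Q"
        if "i \<in> {0..nat (j k)}" for i
      proof -
        have e: "j - (\<lambda>q. int i * unitv n k q) = j + (\<lambda>q. (- int i) * unitv n k q)" by (rule ext) simp
        have "nat (j tk + (- int i)) = nat (j k) - i" using that jnn[of k] jk by auto
        then show ?thesis unfolding e using dpow_unit[OF n, of x y j "- int i" k, folded tk_def, folded Q_def d_def]
          by simp
      qed
      have "R3 = of_int (A h k + 1) * (\<Sum>i\<in>{0..nat (j k)}. of_nat (nat (j k) choose i) * (d ^ (nat (j k) - i) * Q))"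
        unfolding R3_def using True dp by (intro arg_cong[where f="\<lambda>u. of_int (A h k + 1) * u"] sum.cong) auto
      also have "\<dots> = of_int (A h k + 1) * ((\<Sum>i\<in>{0..nat (j k)}. of_nat (nat (j k) choose i) * d ^ (nat (j k) - i)) * Q)"
        by (simp add: sum_distrib_right mult.assoc)
      also have "\<dots> = of_int (A h k + 1) * ((d + 1) ^ nat (j k) * Q)" by (simp only: binom2)
      finally show ?thesis unfolding f_def using ph Mhk by simp
    qed
  qed
  have "(\<Sum>l\<in>L. f l) = R1 + R2 + R3" using s1 s2 s3 s4 s5 by (simp add: add_ac)
  then show ?thesis unfolding f_def L_def R1_def R2_def R3_def I1_def .
qed

lemma row_A:
  assumes n: "0 < n" and g: "good n B" and ind: "indM n r B x y"
  shows "(\<Sum>l\<in>{l. B k l \<noteq> 0}. B k l) = int (card (rowP n x k)) - int (Mmat n x y k k)"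
proof -
  define S where "S = {l. Mmat n x y k l \<noteq> 0}"
  have fin: "finite S" and rs: "(\<Sum>l\<in>S. Mmat n x y k l) = card (rowP n x k)"
    using row_sum[OF n] S_def by auto
  have Bk: "B k k = 0" using g unfolding good_def by simp
  have Bl: "l \<noteq> k \<Longrightarrow> B k l = int (Mmat n x y k l)" for l using ind unfolding indM_def by simp
  have SE: "{l. B k l \<noteq> 0} = S - {k}"
  proof (intro set_eqI)
    fix l show "l \<in> {l. B k l \<noteq> 0} \<longleftrightarrow> l \<in> S - {k}"
      using Bk Bl[of l] unfolding S_def by (cases "l = k") auto
  qed
  have "(\<Sum>l\<in>{l. B k l \<noteq> 0}. B k l) = (\<Sum>l\<in>S - {k}. int (Mmat n x y k l))"
    unfolding SE by (rule sum.cong) (auto simp: Bl)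
  also have "\<dots> = (\<Sum>l\<in>S. int (Mmat n x y k l)) - int (Mmat n x y k k)"
    using fin by (simp add: sum_diff1 S_def)
  also have "(\<Sum>l\<in>S. int (Mmat n x y k l)) = int (card (rowP n x k))"
  proof -
    have "int (\<Sum>l\<in>S. Mmat n x y k l) = int (card (rowP n x k))" using rs by (rule arg_cong)
    then show ?thesis by simp
  qed
  finally show ?thesis .
qed

lemma ind0_eq:
  assumes n: "0 < n" and ind: "indM n r 0 x z" shows "z = x"
proof -
  have lx: "length x = r" and lz: "length z = r" using ind unfolding indM_def by auto
  show ?thesis
  proof (rule nth_equalityI)
    show "length z = length x" using lx lz by simp
    fix s assume s: "s < length z"
    show "z!s = x!s"
    proof (rule ccontr)
      assume ne: "z!s \<noteq> x!s"
      have mem: "s \<in> {s'. s' < length x \<and> x!s' - z!s' = x!s - z!s \<and> int n dvd (x!s - x!s')}"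
        using s lx lz by simp
      have fin: "finite {s'. s' < length x \<and> x!s' - z!s' = x!s - z!s \<and> int n dvd (x!s - x!s')}"
        by (rule finite_subset[of _ "{..<length x}"]) auto
      have "Mmat n x z (x!s) (z!s) \<noteq> 0" unfolding Mmat_alt[OF n]
        using mem fin by (auto simp: card_eq_0_iff)
      moreover have "int (Mmat n x z (x!s) (z!s)) = 0" using ind ne unfolding indM_def by simp
      ultimately show False by simp
    qed
  qed
qed

lemma ind0_refl:
  assumes n: "0 < n" and lx: "length x = r" shows "indM n r 0 x x"
proof -
  have "Mmat n x x a b = 0" if "a \<noteq> b" for a b
    unfolding Mmat_alt[OF n] using that by simp
  then show ?thesis unfolding indM_def using lx by simp
qed

lemma dpow_split0:
  assumes n: "0 < n" and t: "t \<in> {1..int n}"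
  shows "dpow n x y j = of_nat (Mmat n x y t t) ^ nat (j t)
     * (\<Prod>q\<in>{1..int n} - {t}. of_nat (Mmat n x y q q) ^ nat (j q))"
proof -
  have e2: "j + (\<lambda>q. 0 * unitv n t q) = j" by (rule ext) simp
  have r: "(t - 1) mod int n + 1 = t" using rep_id t by auto
  have "dpow n x y j = dpow n x y (j + (\<lambda>q. 0 * unitv n t q))" by (simp only: e2)
  also have "\<dots> = of_nat (Mmat n x y ((t - 1) mod int n + 1) ((t - 1) mod int n + 1)) ^ nat (j ((t - 1) mod int n + 1) + 0)
     * (\<Prod>q\<in>{1..int n} - {(t - 1) mod int n + 1}. of_nat (Mmat n x y q q) ^ nat (j q))"
    by (rule dpow_unit[OF n])
  finally show ?thesis unfolding r by simp
qed

lemma part1_pt: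
  assumes n: "0 < n" and t: "1 \<le> t" "t \<le> int n" and gA: "good n A" and j: "j \<in> NN_tri n"
  shows "sprod r (Abr n r 0 (unitv n t)) (Abr n r A j) x y
    = Abr n r A (j + unitv n t) x y + of_int (\<Sum>s\<in>{s. A t s \<noteq> 0}. A t s) * Abr n r A j x y"
proof -
  define Z where "Z = {z. length z = r \<and> Abr n r A j z y \<noteq> 0}"
  have finZ: "finite Z" unfolding Z_def by (rule supp_fin[OF n gA])
  have tS: "t \<in> {1..int n}" using t by simp
  have jnn: "0 \<le> j t" using j unfolding NN_tri_def by auto
  have F: "Abr n r 0 (unitv n t) x z = (if indM n r 0 x z then dpow n x z (unitv n t) else 0)" for z
    by (rule Abr_pt[OF n good_zero])
  have LHS: "sprod r (Abr n r 0 (unitv n t)) (Abr n r A j) x y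
      = (\<Sum>z\<in>Z. Abr n r 0 (unitv n t) x z * Abr n r A j z y)"
    unfolding sprod_def Z_def by simp
  show ?thesis
  proof (cases "length x = r")
    case False
    then have "\<not> indM n r 0 x z" for z unfolding indM_def by simp
    then have "Abr n r 0 (unitv n t) x z = 0" for z using F by simp
    moreover have "\<not> indM n r A x y" using False unfolding indM_def by simp
    ultimately show ?thesis unfolding LHS using Abr_pt[OF n gA] by simp
  next
    case lx: True
    have "(\<Sum>z\<in>Z. Abr n r 0 (unitv n t) x z * Abr n r A j z y)
        = (\<Sum>z\<in>Z \<union> {x}. Abr n r 0 (unitv n t) x z * Abr n r A j z y)"
      by (rule sum.mono_neutral_left) (use finZ lx in \<open>auto simp: Z_def\<close>)
    also have "\<dots> = (\<Sum>z\<in>{x}. Abr n r 0 (unitv n t) x z * Abr n r A j z y)"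
      by (rule sum.mono_neutral_right) (use finZ F ind0_eq[OF n] in auto)
    also have "\<dots> = dpow n x x (unitv n t) * Abr n r A j x y"
      using F ind0_refl[OF n lx] by simp
    finally have L: "sprod r (Abr n r 0 (unitv n t)) (Abr n r A j) x y = dpow n x x (unitv n t) * Abr n r A j x y"
      using LHS by simp
    have dx: "dpow n x x (unitv n t) = of_nat (card (rowP n x t))"
    proof -
      have e: "unitv n t = (\<lambda>_. 0) + (\<lambda>q. 1 * unitv n t q)" by (rule ext) simp
      have r: "(t - 1) mod int n + 1 = t" using rep_id t by auto
      have "dpow n x x (unitv n t) = dpow n x x ((\<lambda>_. 0) + (\<lambda>q. 1 * unitv n t q))"
        by (rule arg_cong[OF e])
      also have "\<dots> = of_nat (Mmat n x x ((t - 1) mod int n + 1) ((t - 1) mod int n + 1)) ^ nat ((\<lambda>_. 0) ((t - 1) mod int n + 1) + 1)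
         * (\<Prod>q\<in>{1..int n} - {(t - 1) mod int n + 1}. of_nat (Mmat n x x q q) ^ nat ((\<lambda>_. 0::int) q))"
        by (rule dpow_unit[OF n])
      finally have "dpow n x x (unitv n t) = of_nat (Mmat n x x t t)" unfolding r by simp
      moreover have "Mmat n x x t t = card (rowP n x t)" unfolding Mmat_alt[OF n] rowP_def by simp
      ultimately show ?thesis by simp
    qed
    show ?thesis
    proof (cases "indM n r A x y")
      case False
      then show ?thesis unfolding L using Abr_pt[OF n gA] by simp
    next
      case ind: True
      have rA: "(\<Sum>l\<in>{l. A t l \<noteq> 0}. A t l) = int (card (rowP n x t)) - int (Mmat n x y t t)"
        by (rule row_A[OF n gA ind])
      define d where "d = (of_nat (Mmat n x y t t) :: rat)"
      define P where "P = (\<Prod>q\<in>{1..int n} - {t}. (of_nat (Mmat n x y q q)::rat) ^ nat (j q))"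
      have d1: "dpow n x y j = d ^ nat (j t) * P" unfolding d_def P_def by (rule dpow_split0[OF n tS])
      have d2: "dpow n x y (j + unitv n t) = d ^ (nat (j t) + 1) * P"
      proof -
        have "dpow n x y (j + unitv n t) = of_nat (Mmat n x y t t) ^ nat ((j + unitv n t) t)
            * (\<Prod>q\<in>{1..int n} - {t}. of_nat (Mmat n x y q q) ^ nat ((j + unitv n t) q))"
          by (rule dpow_split0[OF n tS])
        also have "(\<Prod>q\<in>{1..int n} - {t}. (of_nat (Mmat n x y q q)::rat) ^ nat ((j + unitv n t) q)) = P"
          unfolding P_def by (rule prod.cong[OF refl]) (auto simp: unitv_rep[OF n] rep_id t)
        also have "nat ((j + unitv n t) t) = nat (j t) + 1" using jnn unfolding unitv_def by simp
        finally show ?thesis unfolding d_def .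
      qed
      have "of_nat (card (rowP n x t)) * dpow n x y j
          = dpow n x y (j + unitv n t) + of_int (\<Sum>s\<in>{s. A t s \<noteq> 0}. A t s) * dpow n x y j"
        unfolding d1 d2 rA d_def by (simp add: algebra_simps)
      then show ?thesis unfolding L dx using Abr_pt[OF n gA] ind by simp
    qed
  qed
qed

lemma app3: "((F1::selt) + F2 + F3) x y = F1 x y + F2 x y + F3 x y" by simp

lemma generic:
  assumes n: "0 < n" and h: "1 \<le> h" "h \<le> int n" and hk: "h \<noteq> k" and gA: "good n A"
    and nn: "\<forall>a b. 0 \<le> A a b" and j: "j \<in> NN_tri n"
  shows "sprod r (Abr n r (E_tri n h k) 0) (Abr n r A j) =
     (\<Sum>i\<in>{i. i \<noteq> h \<and> i \<noteq> k \<and> 1 \<le> A k i}. ssc (of_int (A h i + 1)) (Abr n r (A + E_tri n h i - E_tri n k i) j))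
   + (\<Sum>i\<in>{0..nat (j h)}. ssc ((-1) ^ i * of_nat (nat (j h) choose i))
        (Abr n r (A - E_tri n k h) (j + (\<lambda>q. (1 - int i) * unitv n h q))))
   + ssc (of_int (A h k + 1)) (\<Sum>i\<in>{0..nat (j k)}. ssc (of_nat (nat (j k) choose i))
        (Abr n r (A + E_tri n h k) (j - (\<lambda>q. int i * unitv n k q))))"
proof (rule ext, rule ext)
  fix x y
  define I1 where "I1 = {i. i \<noteq> h \<and> i \<noteq> k \<and> 1 \<le> A k i}"
  have e1: "(\<Sum>i\<in>I1. ssc (of_int (A h i + 1)) (Abr n r (A + E_tri n h i - E_tri n k i) j)) x y
      = (\<Sum>i\<in>I1. of_int (A h i + 1) * (if indM n r (A + E_tri n h i - E_tri n k i) x y then dpow n x y j else 0))"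
    unfolding sum_app ssc_app
  proof (rule sum.cong[OF refl])
    fix i assume "i \<in> I1"
    then have hi: "h \<noteq> i" and ki: "k \<noteq> i" unfolding I1_def by auto
    have g: "good n (A + E_tri n h i - E_tri n k i)"
      by (rule good_diff[OF good_add[OF gA good_E[OF hi]] good_E[OF ki]])
    show "of_int (A h i + 1) * Abr n r (A + E_tri n h i - E_tri n k i) j x y
        = of_int (A h i + 1) * (if indM n r (A + E_tri n h i - E_tri n k i) x y then dpow n x y j else 0)"
      using Abr_pt[OF n g] by simp
  qed
  have kh: "k \<noteq> h" using hk by simp
  have g2: "good n (A - E_tri n k h)" by (rule good_diff[OF gA good_E[OF kh]])
  have g3: "good n (A + E_tri n h k)" by (rule good_add[OF gA good_E[OF hk]])
  have e2: "(\<Sum>i\<in>{0..nat (j h)}. ssc ((-1) ^ i * of_nat (nat (j h) choose i))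
        (Abr n r (A - E_tri n k h) (j + (\<lambda>q. (1 - int i) * unitv n h q)))) x y
     = (\<Sum>i\<in>{0..nat (j h)}. ((-1) ^ i * of_nat (nat (j h) choose i)) *
        (if indM n r (A - E_tri n k h) x y then dpow n x y (j + (\<lambda>q. (1 - int i) * unitv n h q)) else 0))"
    unfolding sum_app ssc_app Abr_pt[OF n g2] by (rule refl)
  have e3: "ssc (of_int (A h k + 1)) (\<Sum>i\<in>{0..nat (j k)}. ssc (of_nat (nat (j k) choose i))
        (Abr n r (A + E_tri n h k) (j - (\<lambda>q. int i * unitv n k q)))) x y
     = of_int (A h k + 1) * (\<Sum>i\<in>{0..nat (j k)}. of_nat (nat (j k) choose i) *
        (if indM n r (A + E_tri n h k) x y then dpow n x y (j - (\<lambda>q. int i * unitv n k q)) else 0))"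
    unfolding sum_app ssc_app Abr_pt[OF n g3] by (rule refl)
  show "sprod r (Abr n r (E_tri n h k) 0) (Abr n r A j) x y =
     ((\<Sum>i\<in>{i. i \<noteq> h \<and> i \<noteq> k \<and> 1 \<le> A k i}. ssc (of_int (A h i + 1)) (Abr n r (A + E_tri n h i - E_tri n k i) j))
   + (\<Sum>i\<in>{0..nat (j h)}. ssc ((-1) ^ i * of_nat (nat (j h) choose i))
        (Abr n r (A - E_tri n k h) (j + (\<lambda>q. (1 - int i) * unitv n h q))))
   + ssc (of_int (A h k + 1)) (\<Sum>i\<in>{0..nat (j k)}. ssc (of_nat (nat (j k) choose i))
        (Abr n r (A + E_tri n h k) (j - (\<lambda>q. int i * unitv n k q))))) x y"
  proof (cases "length x = r \<and> length y = r")
    case True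
    then have len: "length x = r" "length y = r" by auto
    have X: "sprod r (Abr n r (E_tri n h k) 0) (Abr n r A j) x y =
    (\<Sum>i\<in>{i. i \<noteq> h \<and> i \<noteq> k \<and> 1 \<le> A k i}. of_int (A h i + 1) *
        (if indM n r (A + E_tri n h i - E_tri n k i) x y then dpow n x y j else 0))
  + (\<Sum>i\<in>{0..nat (j h)}. ((-1) ^ i * of_nat (nat (j h) choose i)) *
        (if indM n r (A - E_tri n k h) x y then dpow n x y (j + (\<lambda>q. (1 - int i) * unitv n h q)) else 0))
  + of_int (A h k + 1) * (\<Sum>i\<in>{0..nat (j k)}. of_nat (nat (j k) choose i) *
        (if indM n r (A + E_tri n h k) x y then dpow n x y (j - (\<lambda>q. int i * unitv n k q)) else 0))"
      using LHS_pt[OF n hk gA len] main_pt[OF n h hk gA nn j len] by (rule trans)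
    show ?thesis unfolding app3 e1[unfolded I1_def] e2 e3 by (rule X)
  next
    case False
    then have ni: "\<not> indM n r B x y" for B unfolding indM_def by auto
    have zz: "Abr n r (E_tri n h k) 0 x z * Abr n r A j z y = 0" for z
    proof (cases "length x = r")
      case True
      then have "length y \<noteq> r" using False by simp
      then have "\<not> indM n r A z y" unfolding indM_def by simp
      then show ?thesis using Abr_pt[OF n gA] by simp
    next
      case False
      then have "\<not> indM n r (E_tri n h k) x z" unfolding indM_def by simp
      then show ?thesis using Abr_pt[OF n good_E[OF hk]] by simp
    qed
    have "sprod r (Abr n r (E_tri n h k) 0) (Abr n r A j) x y = 0" unfolding sprod_def
      by (intro sum.neutral ballI) (rule zz)
    then show ?thesis unfolding app3 e1[unfolded I1_def] e2 e3 using ni by simp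
  qed
qed

lemma ssc_sum: "ssc c (\<Sum>i\<in>I. f i) = (\<Sum>i\<in>I. ssc c (f i))"
  by (intro ext) (simp add: ssc_app sum_app sum_distrib_left)

lemma ssc_ssc: "ssc c (ssc d f) = ssc (c * d) f"
  by (intro ext) (simp add: ssc_app)

lemma dvd_shift_m: "int n dvd (a - (h + m * int n)) \<longleftrightarrow> int n dvd (a - h)"
proof -
  have e: "a - (h + m * int n) = (a - h) + int n * (- m)" by (simp add: algebra_simps)
  show ?thesis unfolding e by (rule dvd_add_left_iff[OF dvd_triv_left])
qed

lemma E_shift: "E_tri n (h + m * int n) (s + m * int n) = E_tri n h s"
  by (intro ext) (simp add: E_alt dvd_shift_m)

lemma E_shift2: "E_tri n (h + m * int n) h = E_tri n h (h - m * int n)"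
  by (intro ext) (simp add: E_alt dvd_shift_m)

theorem theorem6p2p2:
  fixes n r :: nat and h t :: int and j :: "int \<Rightarrow> int" and A :: smat
  assumes "2 \<le> n" and "1 \<le> h" and "h \<le> int n" and "1 \<le> t" and "t \<le> int n"
    and "j \<in> NN_tri n" and "A \<in> Theta_pm n"
  shows "(sprod r (Abr n r 0 (unitv n t)) (Abr n r A j)
           = Abr n r A (j + unitv n t) + ssc (of_int (\<Sum>s\<in>{s. A t s \<noteq> 0}. A t s)) (Abr n r A j))
    \<and> (\<forall>\<epsilon>::int. \<epsilon> \<in> {1, -1} \<longrightarrow>
         sprod r (Abr n r (E_tri n h (h + \<epsilon>)) 0) (Abr n r A j)
         = (\<Sum>i\<in>{i. i \<noteq> h \<and> i \<noteq> h + \<epsilon> \<and> 1 \<le> A (h + \<epsilon>) i}.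
               ssc (of_int (A h i + 1)) (Abr n r (A + E_tri n h i - E_tri n (h + \<epsilon>) i) j))
         + (\<Sum>i\<in>{0..nat (j h)}.
               ssc ((-1) ^ i * of_nat (nat (j h) choose i))
                   (Abr n r (A - E_tri n (h + \<epsilon>) h) (j + (\<lambda>k. (1 - int i) * unitv n h k))))
         + ssc (of_int (A h (h + \<epsilon>) + 1))
             (\<Sum>i\<in>{0..nat (j (h + \<epsilon>))}.
               ssc (of_nat (nat (j (h + \<epsilon>)) choose i))
                   (Abr n r (A + E_tri n h (h + \<epsilon>)) (j - (\<lambda>k. int i * unitv n (h + \<epsilon>) k)))))
    \<and> (\<forall>m::int. m \<noteq> 0 \<longrightarrow>
         sprod r (Abr n r (E_tri n h (h + m * int n)) 0) (Abr n r A j)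
         = (\<Sum>s\<in>{s. s \<notin> {h, h - m * int n} \<and> 1 \<le> A h s}.
               ssc (of_int (A h (s + m * int n) + 1))
                   (Abr n r (A + E_tri n h (s + m * int n) - E_tri n h s) j))
         + (\<Sum>u\<in>{0..nat (j h)}.
               ssc (of_int (A h (h + m * int n) + 1) * of_nat (nat (j h) choose u))
                   (Abr n r (A + E_tri n h (h + m * int n)) (j - (\<lambda>k. int u * unitv n h k))))
         + (\<Sum>u\<in>{0..nat (j h)}.
               ssc ((-1) ^ u * of_nat (nat (j h) choose u))
                   (Abr n r (A - E_tri n h (h - m * int n)) (j + (\<lambda>k. (1 - int u) * unitv n h k)))))"
proof -
  have n: "0 < n" using assms(1) by simp
  have h: "1 \<le> h" "h \<le> int n" using assms by auto
  have t: "1 \<le> t" "t \<le> int n" using assms by auto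
  have j: "j \<in> NN_tri n" using assms by simp
  have gA: "good n A" using good_Theta assms(7) by blast
  have nn: "\<forall>a b. 0 \<le> A a b" using assms(7) unfolding Theta_pm_def by auto
  have per: "periodic_mat n A" using gA unfolding good_def by simp
  have jp: "\<And>q. j (q + int n) = j q" using j unfolding NN_tri_def by auto
  have P1: "sprod r (Abr n r 0 (unitv n t)) (Abr n r A j)
           = Abr n r A (j + unitv n t) + ssc (of_int (\<Sum>s\<in>{s. A t s \<noteq> 0}. A t s)) (Abr n r A j)"
    by (intro ext) (simp add: part1_pt[OF n t gA j] ssc_app)
  have P2: "\<forall>\<epsilon>::int. \<epsilon> \<in> {1, -1} \<longrightarrow>
         sprod r (Abr n r (E_tri n h (h + \<epsilon>)) 0) (Abr n r A j)
         = (\<Sum>i\<in>{i. i \<noteq> h \<and> i \<noteq> h + \<epsilon> \<and> 1 \<le> A (h + \<epsilon>) i}.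
               ssc (of_int (A h i + 1)) (Abr n r (A + E_tri n h i - E_tri n (h + \<epsilon>) i) j))
         + (\<Sum>i\<in>{0..nat (j h)}.
               ssc ((-1) ^ i * of_nat (nat (j h) choose i))
                   (Abr n r (A - E_tri n (h + \<epsilon>) h) (j + (\<lambda>k. (1 - int i) * unitv n h k))))
         + ssc (of_int (A h (h + \<epsilon>) + 1))
             (\<Sum>i\<in>{0..nat (j (h + \<epsilon>))}.
               ssc (of_nat (nat (j (h + \<epsilon>)) choose i))
                   (Abr n r (A + E_tri n h (h + \<epsilon>)) (j - (\<lambda>k. int i * unitv n (h + \<epsilon>) k))))"
  proof (intro allI impI)
    fix \<epsilon> :: int assume "\<epsilon> \<in> {1, -1}"
    then have hk: "h \<noteq> h + \<epsilon>" by auto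
    show "sprod r (Abr n r (E_tri n h (h + \<epsilon>)) 0) (Abr n r A j)
         = (\<Sum>i\<in>{i. i \<noteq> h \<and> i \<noteq> h + \<epsilon> \<and> 1 \<le> A (h + \<epsilon>) i}.
               ssc (of_int (A h i + 1)) (Abr n r (A + E_tri n h i - E_tri n (h + \<epsilon>) i) j))
         + (\<Sum>i\<in>{0..nat (j h)}.
               ssc ((-1) ^ i * of_nat (nat (j h) choose i))
                   (Abr n r (A - E_tri n (h + \<epsilon>) h) (j + (\<lambda>k. (1 - int i) * unitv n h k))))
         + ssc (of_int (A h (h + \<epsilon>) + 1))
             (\<Sum>i\<in>{0..nat (j (h + \<epsilon>))}.
               ssc (of_nat (nat (j (h + \<epsilon>)) choose i))
                   (Abr n r (A + E_tri n h (h + \<epsilon>)) (j - (\<lambda>k. int i * unitv n (h + \<epsilon>) k))))"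
      by (rule generic[OF n h hk gA nn j])
  qed
  have P3: "\<forall>m::int. m \<noteq> 0 \<longrightarrow>
         sprod r (Abr n r (E_tri n h (h + m * int n)) 0) (Abr n r A j)
         = (\<Sum>s\<in>{s. s \<notin> {h, h - m * int n} \<and> 1 \<le> A h s}.
               ssc (of_int (A h (s + m * int n) + 1))
                   (Abr n r (A + E_tri n h (s + m * int n) - E_tri n h s) j))
         + (\<Sum>u\<in>{0..nat (j h)}.
               ssc (of_int (A h (h + m * int n) + 1) * of_nat (nat (j h) choose u))
                   (Abr n r (A + E_tri n h (h + m * int n)) (j - (\<lambda>k. int u * unitv n h k))))
         + (\<Sum>u\<in>{0..nat (j h)}.
               ssc ((-1) ^ u * of_nat (nat (j h) choose u))
                   (Abr n r (A - E_tri n h (h - m * int n)) (j + (\<lambda>k. (1 - int u) * unitv n h k))))"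
  proof (intro allI impI)
    fix m :: int assume m: "m \<noteq> 0"
    have hk: "h \<noteq> h + m * int n" using m n by simp
    have G: "sprod r (Abr n r (E_tri n h (h + m * int n)) 0) (Abr n r A j) =
     (\<Sum>i\<in>{i. i \<noteq> h \<and> i \<noteq> h + m * int n \<and> 1 \<le> A (h + m * int n) i}. ssc (of_int (A h i + 1)) (Abr n r (A + E_tri n h i - E_tri n (h + m * int n) i) j))
   + (\<Sum>i\<in>{0..nat (j h)}. ssc ((-1) ^ i * of_nat (nat (j h) choose i))
        (Abr n r (A - E_tri n (h + m * int n) h) (j + (\<lambda>q. (1 - int i) * unitv n h q))))
   + ssc (of_int (A h (h + m * int n) + 1)) (\<Sum>i\<in>{0..nat (j (h + m * int n))}. ssc (of_nat (nat (j (h + m * int n)) choose i))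
        (Abr n r (A + E_tri n h (h + m * int n)) (j - (\<lambda>q. int i * unitv n (h + m * int n) q))))"
      by (rule generic[OF n h hk gA nn j])
    have Aper: "A (h + m * int n) (s + m * int n) = A h s" for s by (rule periodic_int[OF per])
    have R1: "(\<Sum>i\<in>{i. i \<noteq> h \<and> i \<noteq> h + m * int n \<and> 1 \<le> A (h + m * int n) i}. ssc (of_int (A h i + 1)) (Abr n r (A + E_tri n h i - E_tri n (h + m * int n) i) j))
      = (\<Sum>s\<in>{s. s \<notin> {h, h - m * int n} \<and> 1 \<le> A h s}.
               ssc (of_int (A h (s + m * int n) + 1))
                   (Abr n r (A + E_tri n h (s + m * int n) - E_tri n h s) j))"
    proof (rule sum.reindex_cong[where l="\<lambda>s. s + m * int n"])
      show "inj_on (\<lambda>s. s + m * int n) {s. s \<notin> {h, h - m * int n} \<and> 1 \<le> A h s}" by (rule inj_onI) simp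
      show "{i. i \<noteq> h \<and> i \<noteq> h + m * int n \<and> 1 \<le> A (h + m * int n) i} = (\<lambda>s. s + m * int n) ` {s. s \<notin> {h, h - m * int n} \<and> 1 \<le> A h s}"
      proof (intro set_eqI iffI)
        fix i assume i: "i \<in> {i. i \<noteq> h \<and> i \<noteq> h + m * int n \<and> 1 \<le> A (h + m * int n) i}"
        have "A (h + m * int n) i = A h (i - m * int n)" using Aper[of "i - m * int n"] by simp
        then show "i \<in> (\<lambda>s. s + m * int n) ` {s. s \<notin> {h, h - m * int n} \<and> 1 \<le> A h s}"
          using i by (intro image_eqI[of _ _ "i - m * int n"]) auto
      next
        fix i assume "i \<in> (\<lambda>s. s + m * int n) ` {s. s \<notin> {h, h - m * int n} \<and> 1 \<le> A h s}"
        then obtain s where s: "s \<notin> {h, h - m * int n}" "1 \<le> A h s" and i: "i = s + m * int n" by auto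
        then show "i \<in> {i. i \<noteq> h \<and> i \<noteq> h + m * int n \<and> 1 \<le> A (h + m * int n) i}" using Aper[of s] by auto
      qed
      fix s
      show "ssc (of_int (A h (s + m * int n) + 1)) (Abr n r (A + E_tri n h (s + m * int n) - E_tri n (h + m * int n) (s + m * int n)) j)
          = ssc (of_int (A h (s + m * int n) + 1)) (Abr n r (A + E_tri n h (s + m * int n) - E_tri n h s) j)"
        unfolding E_shift by (rule refl)
    qed
    have R2: "(\<Sum>i\<in>{0..nat (j h)}. ssc ((-1) ^ i * of_nat (nat (j h) choose i))
        (Abr n r (A - E_tri n (h + m * int n) h) (j + (\<lambda>q. (1 - int i) * unitv n h q))))
      = (\<Sum>u\<in>{0..nat (j h)}.
               ssc ((-1) ^ u * of_nat (nat (j h) choose u))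
                   (Abr n r (A - E_tri n h (h - m * int n)) (j + (\<lambda>k. (1 - int u) * unitv n h k))))"
      unfolding E_shift2 by (rule refl)
    have uk: "unitv n (h + m * int n) = unitv n h" unfolding unitv_def by (intro ext) simp
    have jk: "j (h + m * int n) = j h" by (rule per1[of j n, OF jp])
    have R3: "ssc (of_int (A h (h + m * int n) + 1)) (\<Sum>i\<in>{0..nat (j (h + m * int n))}. ssc (of_nat (nat (j (h + m * int n)) choose i))
        (Abr n r (A + E_tri n h (h + m * int n)) (j - (\<lambda>q. int i * unitv n (h + m * int n) q))))
      = (\<Sum>u\<in>{0..nat (j h)}.
               ssc (of_int (A h (h + m * int n) + 1) * of_nat (nat (j h) choose u))
                   (Abr n r (A + E_tri n h (h + m * int n)) (j - (\<lambda>k. int u * unitv n h k))))"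
      unfolding uk jk ssc_sum ssc_ssc by (rule refl)
    show "sprod r (Abr n r (E_tri n h (h + m * int n)) 0) (Abr n r A j)
         = (\<Sum>s\<in>{s. s \<notin> {h, h - m * int n} \<and> 1 \<le> A h s}.
               ssc (of_int (A h (s + m * int n) + 1))
                   (Abr n r (A + E_tri n h (s + m * int n) - E_tri n h s) j))
         + (\<Sum>u\<in>{0..nat (j h)}.
               ssc (of_int (A h (h + m * int n) + 1) * of_nat (nat (j h) choose u))
                   (Abr n r (A + E_tri n h (h + m * int n)) (j - (\<lambda>k. int u * unitv n h k))))
         + (\<Sum>u\<in>{0..nat (j h)}.
               ssc ((-1) ^ u * of_nat (nat (j h) choose u))
                   (Abr n r (A - E_tri n h (h - m * int n)) (j + (\<lambda>k. (1 - int u) * unitv n h k))))"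
      unfolding G R1 R2 R3 by (simp only: ac_simps)
  qed
  show ?thesis using P1 P2 P3 by blast
qed

end
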